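(* Let $n\ge1$. Let $x_1,\dots,x_n$ be nonzero complex numbers with $x_i/x_j\notin\{q^m:m\in\mathbb{Z}\}$ for $i\ne j$. Let $b,z,w,r,s,t\in\mathbb{C}$ and $u,v,bz\in\mathbb{C}\setminus\{q^{-m}:m\ge0\}$. Assume $\max(|z|,|w|)<1$ and, for each $j=1,\dots,n$, $$\max(|z|,|w|)<|x_1x_2\cdots x_n|\,|x_j|^{-n}q^{(n-1)/2}.$$ For $\mathbf m=(m_1,\dots,m_n)\in\mathbb{Z}_{\ge0}^n$ put $|\mathbf m|=m_1+\cdots+m_n$ and $e_2(\mathbf m)=\sum_{1\le i<j\le n}m_im_j$, and define $$W(\mathbf m)=\prod_{1\le i<j\le n}\frac{1-\frac{x_i}{x_j}q^{m_i-m_j}}{1-\frac{x_i}{x_j}}\;\prod_{i,j=1}^n\big(q\tfrac{x_i}{x_j};q\big)_{m_i}^{-1}\;\prod_{i=1}^nx_i^{nm_i-|\mathbf m|}\;(-1)^{(n-1)|\mathbf m|}\;q^{m_2+2m_3+\cdots+(n-1)m_n+(n-1)\sum_{i=1}^n\binom{m_i}2-e_2(\mathbf m)}.$$ Then $$\sum_{\mathbf m\in\mathbb{Z}_{\ge0}^n}W(\mathbf m)\,(b;q)_{|\mathbf m|}\,\phi_{|\mathbf m|}^{(r,s,t;u,v)}(z,w|q)=\frac{(bz;q)_\infty}{(z;q)_\infty}\sum_{N=0}^\infty\frac{(r,s,t,b;q)_N}{(q,u,v,bz;q)_N}w^N.$$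
   Context: Throughout, $0<q<1$. $(\alpha;q)_0=1$, $(\alpha;q)_n=\prod_{j=0}^{n-1}(1-\alpha q^j)$, $(\alpha;q)_\infty=\prod_{j\ge0}(1-\alpha q^j)$, and $(\alpha_1,\dots,\alpha_r;q)_n=\prod_i(\alpha_i;q)_n$. $\begin{bmatrix}n\\k\end{bmatrix}=\frac{(q;q)_n}{(q;q)_k(q;q)_{n-k}}$. $$\phi_n^{(a,b,c;d,e)}(x,y|q)=\sum_{k=0}^n\begin{bmatrix}n\\k\end{bmatrix}\frac{(a,b,c;q)_k}{(d,e;q)_k}x^{n-k}y^k.$$ *)

theory Defs
  imports "HOL-Analysis.Analysis"
begin

definition qpoch :: "complex \<Rightarrow> complex \<Rightarrow> nat \<Rightarrow> complex" where
  "qpoch a q n = (\<Prod>j<n. (1 - a * q ^ j))"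

definition qpoch_inf :: "complex \<Rightarrow> complex \<Rightarrow> complex" where
  "qpoch_inf a q = lim (\<lambda>N. qpoch a q N)"

definition qbinom :: "complex \<Rightarrow> nat \<Rightarrow> nat \<Rightarrow> complex" where
  "qbinom q n k = qpoch q q n / (qpoch q q k * qpoch q q (n - k))"

definition qphi :: "complex \<Rightarrow> complex \<Rightarrow> complex \<Rightarrow> complex \<Rightarrow> complex \<Rightarrow> nat
    \<Rightarrow> complex \<Rightarrow> complex \<Rightarrow> complex \<Rightarrow> complex" where
  "qphi a b c d e n x y q =
     (\<Sum>k\<le>n. qbinom q n k * (qpoch a q k * qpoch b q k * qpoch c q k)
              / (qpoch d q k * qpoch e q k) * x ^ (n - k) * y ^ k)"

definition Wt :: "real \<Rightarrow> nat \<Rightarrow> (nat \<Rightarrow> complex) \<Rightarrow> (nat \<Rightarrow> nat) \<Rightarrow> complex" where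
  "Wt q n x m =
    (let Q = complex_of_real q;
         M = (\<Sum>i\<in>{1..n}. m i);
         e2 = (\<Sum>i\<in>{1..n}. \<Sum>j\<in>{i+1..n}. m i * m j)
     in (\<Prod>i\<in>{1..n}. \<Prod>j\<in>{i+1..n}.
            (1 - x i / x j * Q powi (int (m i) - int (m j))) / (1 - x i / x j))
      * inverse (\<Prod>i\<in>{1..n}. \<Prod>j\<in>{1..n}. qpoch (Q * x i / x j) Q (m i))
      * (\<Prod>i\<in>{1..n}. x i powi (int n * int (m i) - int M))
      * (-1) ^ ((n - 1) * M)
      * Q powi (int (\<Sum>i\<in>{1..n}. (i - 1) * m i)
                + int (n - 1) * int (\<Sum>i\<in>{1..n}. m i choose 2) - int e2))"

end

theory Submission
  imports Defs "HOL-Computational_Algebra.Polynomial"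
begin

lemma qpoch_0 [simp]: "qpoch a q 0 = 1"
  by (simp add: qpoch_def)

lemma qpoch_Suc: "qpoch a q (Suc n) = qpoch a q n * (1 - a * q ^ n)"
  by (simp add: qpoch_def)

lemma qpoch_add: "qpoch a q (k + j) = qpoch a q k * qpoch (a * q ^ k) q j"
  by (induction j) (simp_all add: qpoch_Suc power_add mult_ac)

lemma qpoch_eq_prod_atMost: "qpoch a q (Suc n) = (\<Prod>i\<le>n. 1 - a * q ^ i)"
  by (simp add: qpoch_def lessThan_Suc_atMost)

lemma qpoch_abs_convergent_prod:
  assumes "norm q < 1"
  shows "abs_convergent_prod (\<lambda>i. 1 - a * q ^ i :: complex)"
proof (rule summable_imp_abs_convergent_prod)
  have "summable (\<lambda>i. norm a * norm q ^ i)"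
    using assms by (intro summable_mult summable_geometric) auto
  then show "summable (\<lambda>i. norm (1 - a * q ^ i - 1))"
    by (simp add: norm_mult norm_power)
qed

lemma qpoch_LIMSEQ:
  assumes "norm q < 1"
  shows "(\<lambda>N. qpoch a q N) \<longlonglongrightarrow> qpoch_inf a q"
proof -
  have "convergent_prod (\<lambda>i. 1 - a * q ^ i)"
    using qpoch_abs_convergent_prod[OF assms] abs_convergent_prod_imp_convergent_prod by blast
  then have "convergent (\<lambda>n. \<Prod>i\<le>n. 1 - a * q ^ i)"
    by (rule convergent_prod_imp_convergent)
  then have "convergent (\<lambda>n. qpoch a q (Suc n))"
    by (simp add: qpoch_eq_prod_atMost)
  then have "convergent (\<lambda>n. qpoch a q n)"
    using convergent_Suc_iff by blast
  then show ?thesis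
    unfolding qpoch_inf_def by (simp add: convergent_LIMSEQ_iff)
qed

lemma qpoch_inf_nonzero:
  assumes "norm q < 1" and "\<And>i. 1 - a * q ^ i \<noteq> 0"
  shows "qpoch_inf a q \<noteq> 0"
proof -
  have "convergent_prod (\<lambda>i. 1 - a * q ^ i)"
    using qpoch_abs_convergent_prod[OF assms(1)] abs_convergent_prod_imp_convergent_prod by blast
  then obtain L where L: "(\<lambda>n. \<Prod>i\<le>n. 1 - a * q ^ i) \<longlonglongrightarrow> L" "L \<noteq> 0"
    using convergent_prod_iff_nz_lim[of "\<lambda>i. 1 - a * q ^ i"] assms(2) by blast
  then have "(\<lambda>n. qpoch a q (Suc n)) \<longlonglongrightarrow> L"
    by (simp add: qpoch_eq_prod_atMost)
  then have "(\<lambda>n. qpoch a q n) \<longlonglongrightarrow> L"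
    using filterlim_sequentially_Suc by blast
  with qpoch_LIMSEQ[OF assms(1)] have "qpoch_inf a q = L"
    using LIMSEQ_unique by blast
  with L show ?thesis by simp
qed

lemma qpoch_nonzero:
  assumes "\<And>i. 1 - a * q ^ i \<noteq> 0"
  shows "qpoch a q n \<noteq> 0"
  using assms by (simp add: qpoch_def)

lemma qpoch_inv_bounded:
  assumes "norm q < 1" and "\<And>i. 1 - a * q ^ i \<noteq> 0"
  shows "\<exists>K>0. \<forall>N. norm (inverse (qpoch a q N)) \<le> K"
proof -
  have "(\<lambda>N. inverse (qpoch a q N)) \<longlonglongrightarrow> inverse (qpoch_inf a q)"
    using qpoch_LIMSEQ[OF assms(1)] qpoch_inf_nonzero[OF assms] by (intro tendsto_inverse) auto
  then have "Bseq (\<lambda>N. inverse (qpoch a q N))"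
    using convergent_imp_Bseq convergentI by blast
  then show ?thesis by (auto simp: Bseq_def)
qed

lemma qpoch_bounded:
  assumes "norm q < 1"
  shows "\<exists>K>0. \<forall>N. norm (qpoch a q N) \<le> K"
proof -
  have "Bseq (\<lambda>N. qpoch a q N)"
    using qpoch_LIMSEQ[OF assms] convergent_imp_Bseq convergentI by blast
  then show ?thesis by (auto simp: Bseq_def)
qed

lemma qpoch_inf_split:
  assumes "norm q < 1"
  shows "qpoch_inf a q = qpoch a q k * qpoch_inf (a * q ^ k) q"
proof -
  have "(\<lambda>N. qpoch a q (k + N)) \<longlonglongrightarrow> qpoch_inf a q"
    using qpoch_LIMSEQ[OF assms, of a] LIMSEQ_ignore_initial_segment[of _ _ k]
    by (simp add: add.commute)
  moreover have "(\<lambda>N. qpoch a q (k + N)) \<longlonglongrightarrow> qpoch a q k * qpoch_inf (a * q ^ k) q"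
    unfolding qpoch_add by (intro tendsto_mult tendsto_const qpoch_LIMSEQ assms)
  ultimately show ?thesis using LIMSEQ_unique by blast
qed

lemma norm_mult_lt1:
  fixes x w :: complex
  assumes "norm x \<le> 1" "norm w < 1"
  shows "norm (x * w) < 1"
proof -
  have "norm x * norm w \<le> norm w"
    using assms by (intro mult_left_le_one_le) auto
  then show ?thesis using assms by (simp add: norm_mult)
qed

lemma norm_pow_le1:
  fixes q :: complex
  assumes "norm q < 1"
  shows "norm (q ^ i) \<le> 1"
  using assms by (simp add: norm_power power_le_one)

lemma qpoch_qq_nonzero:
  assumes "norm q < 1"
  shows "qpoch q q n \<noteq> 0"
proof (rule qpoch_nonzero)
  fix i
  have "norm (q ^ i * q) < 1"
    by (rule norm_mult_lt1[OF norm_pow_le1[OF assms] assms])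
  then show "1 - q * q ^ i \<noteq> 0" by (auto simp: mult.commute)
qed

lemma qq_factor_nonzero:
  assumes "norm q < 1"
  shows "1 - q * q ^ i \<noteq> (0::complex)"
proof -
  have "norm (q ^ i * q) < 1"
    by (rule norm_mult_lt1[OF norm_pow_le1[OF assms] assms])
  then show ?thesis by (auto simp: mult.commute)
qed

lemma qpoch_qq_inv_bounded:
  assumes "norm q < 1"
  shows "\<exists>K>0. \<forall>N. norm (inverse (qpoch q q N)) \<le> K"
  by (rule qpoch_inv_bounded[OF assms qq_factor_nonzero[OF assms]])

lemma qbinomial_thm:
  fixes a q z :: complex
  assumes q: "norm q < 1" and z: "norm z < 1"
  shows "(\<lambda>j. qpoch a q j / qpoch q q j * z ^ j) sums (qpoch_inf (a * z) q / qpoch_inf z q)"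
proof -
  define c where "c j = qpoch a q j / qpoch q q j" for j
  obtain K1 where K1: "K1 > 0" "\<And>N. norm (qpoch a q N) \<le> K1"
    using qpoch_bounded[OF q] by blast
  obtain K2 where K2: "K2 > 0" "\<And>N. norm (inverse (qpoch q q N)) \<le> K2"
    using qpoch_qq_inv_bounded[OF q] by blast
  have cb: "norm (c j) \<le> K1 * K2" for j
    unfolding c_def divide_inverse norm_mult using K1 K2
    by (intro mult_mono) auto
  have summ: "summable (\<lambda>j. c j * w ^ j)" if "norm w < 1" for w
  proof (rule summable_comparison_test')
    show "summable (\<lambda>j. K1 * K2 * norm w ^ j)"
      using that by (intro summable_mult summable_geometric) auto
    show "norm (c j * w ^ j) \<le> K1 * K2 * norm w ^ j" for j
      unfolding norm_mult norm_power using cb[of j] by (intro mult_right_mono) auto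
  qed
  define f where "f w = (\<Sum>j. c j * w ^ j)" for w
  have fs: "(\<lambda>j. c j * w ^ j) sums f w" if "norm w < 1" for w
    unfolding f_def using summ[OF that] by (rule summable_sums)
  have crec: "c (Suc j) * (1 - q ^ Suc j) = c j * (1 - a * q ^ j)" for j
    using qpoch_qq_nonzero[OF q, of j] qpoch_qq_nonzero[OF q, of "Suc j"]
    by (simp add: c_def qpoch_Suc field_simps)
  have func: "(1 - w) * f w = (1 - a * w) * f (q * w)" if w: "norm w < 1" for w
  proof -
    have qw: "norm (q * w) < 1"
      using q w by (intro norm_mult_lt1) auto
    have s1: "(\<lambda>j. c j * w ^ j - c j * (q * w) ^ j) sums (f w - f (q * w))"
      using fs[OF w] fs[OF qw] by (rule sums_diff)
    have s2: "(\<lambda>j. w * (c j * w ^ j) - a * w * (c j * (q * w) ^ j)) sums (w * f w - a * w * f (q * w))"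
      using fs[OF w] fs[OF qw] by (intro sums_diff sums_mult)
    have "(\<lambda>j. c (Suc j) * w ^ Suc j - c (Suc j) * (q * w) ^ Suc j)
          = (\<lambda>j. w * (c j * w ^ j) - a * w * (c j * (q * w) ^ j))"
    proof
      fix j
      have "c (Suc j) * w ^ Suc j - c (Suc j) * (q * w) ^ Suc j = c (Suc j) * (1 - q ^ Suc j) * w ^ Suc j"
        by (simp add: algebra_simps power_mult_distrib)
      also have "\<dots> = c j * (1 - a * q ^ j) * w ^ Suc j" by (simp only: crec)
      finally show "c (Suc j) * w ^ Suc j - c (Suc j) * (q * w) ^ Suc j =
            w * (c j * w ^ j) - a * w * (c j * (q * w) ^ j)"
        by (simp add: algebra_simps power_mult_distrib)
    qed
    with s2 have "(\<lambda>j. c (Suc j) * w ^ Suc j - c (Suc j) * (q * w) ^ Suc j) sums (w * f w - a * w * f (q * w))"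
      by simp
    then have "(\<lambda>j. c j * w ^ j - c j * (q * w) ^ j) sums (w * f w - a * w * f (q * w) + (c 0 * w ^ 0 - c 0 * (q * w) ^ 0))"
      by (subst sums_Suc_iff[symmetric]) simp
    then have "(\<lambda>j. c j * w ^ j - c j * (q * w) ^ j) sums (w * f w - a * w * f (q * w))"
      by simp
    with s1 have "f w - f (q * w) = w * f w - a * w * f (q * w)"
      using sums_unique2 by blast
    then show ?thesis by (simp add: algebra_simps)
  qed
  have qNz: "norm (q ^ N * z) < 1" for N
    by (intro norm_mult_lt1 norm_pow_le1 q z)
  have iter: "qpoch z q N * f z = qpoch (a * z) q N * f (q ^ N * z)" for N
  proof (induction N)
    case 0 then show ?case by simp
  next
    case (Suc N)
    have "qpoch z q (Suc N) * f z = (1 - q ^ N * z) * (qpoch z q N * f z)"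
      by (simp add: qpoch_Suc mult_ac)
    also have "\<dots> = qpoch (a * z) q N * ((1 - q ^ N * z) * f (q ^ N * z))"
      using Suc by (simp add: mult_ac)
    also have "(1 - q ^ N * z) * f (q ^ N * z) = (1 - a * (q ^ N * z)) * f (q * (q ^ N * z))"
      by (rule func[OF qNz])
    finally show ?case by (simp add: qpoch_Suc mult_ac)
  qed
  have f0: "(\<lambda>N. f (q ^ N * z)) \<longlonglongrightarrow> 1"
  proof -
    have cont: "isCont f 0"
    proof -
      have "summable (\<lambda>n. c n * (1/2) ^ n)" by (rule summ) simp
      then have "isCont (\<lambda>x. \<Sum>n. c n * x ^ n) 0"
        by (rule isCont_powser) simp
      then show ?thesis unfolding f_def by simp
    qed
    have "(\<lambda>N. q ^ N * z) \<longlonglongrightarrow> 0"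
      using q by (intro tendsto_mult_left_zero LIMSEQ_power_zero) 
    then have "(\<lambda>N. f (q ^ N * z)) \<longlonglongrightarrow> f 0"
      using cont isCont_tendsto_compose by blast
    moreover have "f 0 = 1" unfolding f_def powser_zero by (simp add: c_def)
    ultimately show ?thesis by simp
  qed
  have "(\<lambda>N. qpoch z q N * f z) \<longlonglongrightarrow> qpoch_inf (a * z) q * 1"
    unfolding iter by (intro tendsto_mult qpoch_LIMSEQ q f0)
  moreover have "(\<lambda>N. qpoch z q N * f z) \<longlonglongrightarrow> qpoch_inf z q * f z"
    by (intro tendsto_mult qpoch_LIMSEQ q tendsto_const)
  ultimately have eq: "qpoch_inf z q * f z = qpoch_inf (a * z) q"
    using LIMSEQ_unique by fastforce
  have "qpoch_inf z q \<noteq> 0"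
  proof (rule qpoch_inf_nonzero[OF q])
    fix i
    have "norm (z * q ^ i) < 1" using qNz[of i] by (simp add: mult.commute)
    then show "1 - z * q ^ i \<noteq> 0" by auto
  qed
  with eq have "f z = qpoch_inf (a * z) q / qpoch_inf z q"
    by (simp add: field_simps)
  with fs[OF z] show ?thesis unfolding c_def by simp
qed

lemma geom_has_sum_real:
  fixes c :: real
  assumes "0 \<le> c" "c < 1"
  shows "((\<lambda>k. c ^ k) has_sum (1 / (1 - c))) UNIV"
  using assms by (intro sums_nonneg_imp_has_sum geometric_sums) auto

lemma geom2_summable:
  fixes a c :: real
  assumes "0 \<le> a" "a < 1" "0 \<le> c" "c < 1"
  shows "(\<lambda>(j,k). a ^ j * c ^ k) summable_on (UNIV \<times> UNIV)"
proof (rule summable_on_SigmaI)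
  show "((\<lambda>k. case (j, k) of (j, k) \<Rightarrow> a ^ j * c ^ k) has_sum (a ^ j * (1 / (1 - c)))) UNIV" for j
    using has_sum_cmult_right[OF geom_has_sum_real[OF assms(3,4)], of "a ^ j"] by simp
  have "((\<lambda>j. a ^ j * (1 / (1 - c))) has_sum (1 / (1 - a) * (1 / (1 - c)))) UNIV"
    by (rule has_sum_cmult_left[OF geom_has_sum_real[OF assms(1,2)]])
  then show "(\<lambda>j. a ^ j * (1 / (1 - c))) summable_on UNIV"
    using has_sum_imp_summable by blast
qed (use assms in auto)

lemma factor_nonzero_imp_qpoch_nonzero:
  "(\<And>i. 1 - a * q ^ i \<noteq> 0) \<Longrightarrow> qpoch a q n \<noteq> 0"
  by (rule qpoch_nonzero)

lemma row_eq_aux: fixes Q b :: complex shows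
 "qpoch b Q (j + k) * inverse (qpoch Q Q j) * inverse (qpoch Q Q k) * A * z ^ j * w ^ k =
  (qpoch b Q k * inverse (qpoch Q Q k) * A * w ^ k) * (qpoch (b * Q ^ k) Q j / qpoch Q Q j * z ^ j)"
proof -
  have "qpoch b Q (j + k) = qpoch b Q (k + j)" by (simp add: add.commute)
  also have "\<dots> = qpoch b Q k * qpoch (b * Q^k) Q j" by (rule qpoch_add)
  finally show ?thesis by (simp add: divide_inverse mult_ac)
qed

lemma row_eq_aux2: fixes Q b X Z Y :: complex
  assumes "Z \<noteq> 0" "qpoch Q Q k \<noteq> 0" "qpoch u Q k \<noteq> 0" "qpoch v Q k \<noteq> 0" "qpoch bz Q k \<noteq> 0"
  shows "(qpoch b Q k * inverse (qpoch Q Q k) * (qpoch r Q k * qpoch s Q k * qpoch t Q k / (qpoch u Q k * qpoch v Q k)) * w ^ k) * (X / Z)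
   = (qpoch bz Q k * X) / Z * ((qpoch r Q k * qpoch s Q k * qpoch t Q k * qpoch b Q k)
                      / (qpoch Q Q k * qpoch u Q k * qpoch v Q k * qpoch bz Q k) * w ^ k)"
  using assms by (simp add: field_simps)

lemma diag_eq_aux: fixes Q b :: complex
  assumes "k \<le> M" "\<And>n. qpoch Q Q n \<noteq> 0"
  shows "inverse (qpoch Q Q M) * qpoch b Q M * (qbinom Q M k * (qpoch r Q k * qpoch s Q k * qpoch t Q k)
              / (qpoch u Q k * qpoch v Q k) * z ^ (M - k) * w ^ k) =
   qpoch b Q (M - k + k) * inverse (qpoch Q Q (M - k)) * inverse (qpoch Q Q k) * (qpoch r Q k * qpoch s Q k * qpoch t Q k / (qpoch u Q k * qpoch v Q k)) * z ^ (M - k) * w ^ k"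
proof -
  have e: "M - k + k = M" using assms by simp
  show ?thesis unfolding e qbinom_def using assms(2)[of M] assms(2)[of k] assms(2)[of "M-k"]
    by (simp add: divide_inverse mult_ac)
qed

theorem one_dim_identity:
  fixes Q b z w r s t u v :: complex
  assumes Q: "norm Q < 1" and z: "norm z < 1" and w: "norm w < 1"
    and hu: "\<And>i. 1 - u * Q ^ i \<noteq> 0" and hv: "\<And>i. 1 - v * Q ^ i \<noteq> 0"
    and hbz: "\<And>i. 1 - b * z * Q ^ i \<noteq> 0"
  shows "(\<lambda>M. inverse (qpoch Q Q M) * qpoch b Q M * qphi r s t u v M z w Q) sums
           (qpoch_inf (b * z) Q / qpoch_inf z Q
             * (\<Sum>N. (qpoch r Q N * qpoch s Q N * qpoch t Q N * qpoch b Q N)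
                      / (qpoch Q Q N * qpoch u Q N * qpoch v Q N * qpoch (b * z) Q N) * w ^ N))"
proof -
  define A where "A k = qpoch r Q k * qpoch s Q k * qpoch t Q k / (qpoch u Q k * qpoch v Q k)" for k
  define G where "G = (\<lambda>(j,k). qpoch b Q (j+k) * inverse (qpoch Q Q j) * inverse (qpoch Q Q k) * A k * z ^ j * w ^ k)"
  define C where "C = qpoch_inf (b * z) Q / qpoch_inf z Q"
  define d where "d N = (qpoch r Q N * qpoch s Q N * qpoch t Q N * qpoch b Q N)
                      / (qpoch Q Q N * qpoch u Q N * qpoch v Q N * qpoch (b * z) Q N) * w ^ N" for N
  have qqnz: "qpoch Q Q n \<noteq> 0" for n using qpoch_qq_nonzero[OF Q] .
  have unz: "qpoch u Q n \<noteq> 0" for n using hu by (rule qpoch_nonzero)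
  have vnz: "qpoch v Q n \<noteq> 0" for n using hv by (rule qpoch_nonzero)
  have bznz: "qpoch (b * z) Q n \<noteq> 0" for n using hbz by (rule qpoch_nonzero)
  obtain Kb where Kb: "Kb > 0" "\<And>N. norm (qpoch b Q N) \<le> Kb" using qpoch_bounded[OF Q] by blast
  obtain Kq where Kq: "Kq > 0" "\<And>N. norm (inverse (qpoch Q Q N)) \<le> Kq" using qpoch_qq_inv_bounded[OF Q] by blast
  obtain Kr where Kr: "Kr > 0" "\<And>N. norm (qpoch r Q N) \<le> Kr" using qpoch_bounded[OF Q] by blast
  obtain Ks where Ks: "Ks > 0" "\<And>N. norm (qpoch s Q N) \<le> Ks" using qpoch_bounded[OF Q] by blast
  obtain Kt where Kt: "Kt > 0" "\<And>N. norm (qpoch t Q N) \<le> Kt" using qpoch_bounded[OF Q] by blast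
  obtain Ku where Ku: "Ku > 0" "\<And>N. norm (inverse (qpoch u Q N)) \<le> Ku" using qpoch_inv_bounded[OF Q hu] by blast
  obtain Kv where Kv: "Kv > 0" "\<And>N. norm (inverse (qpoch v Q N)) \<le> Kv" using qpoch_inv_bounded[OF Q hv] by blast
  define KA where "KA = Kr * Ks * Kt * Ku * Kv"
  have KA: "norm (A k) \<le> KA" for k
  proof -
    have "norm (A k) = norm (qpoch r Q k) * norm (qpoch s Q k) * norm (qpoch t Q k)
            * norm (inverse (qpoch u Q k)) * norm (inverse (qpoch v Q k))"
      by (simp add: A_def norm_mult norm_divide norm_inverse divide_inverse)
    also have "\<dots> \<le> KA" unfolding KA_def
      using Kr(1) Ks(1) Kt(1) Ku(1) Kv(1)
      by (intro mult_mono Kr Ks Kt Ku Kv) (auto intro: mult_nonneg_nonneg)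
    finally show ?thesis .
  qed
  define K where "K = Kb * Kq * Kq * KA"
  have Gb: "norm (G (j,k)) \<le> K * (norm z ^ j * norm w ^ k)" for j k
  proof -
    have "norm (G (j,k)) = norm (qpoch b Q (j+k)) * norm (inverse (qpoch Q Q j)) * norm (inverse (qpoch Q Q k)) * norm (A k) * (norm z ^ j * norm w ^ k)"
      by (simp add: G_def norm_mult norm_power)
    also have "\<dots> \<le> K * (norm z ^ j * norm w ^ k)" unfolding K_def
      using Kb(1) Kq(1)
      by (intro mult_right_mono mult_mono Kb Kq KA) (auto intro: mult_nonneg_nonneg)
    finally show ?thesis .
  qed
  have Gsum: "G summable_on UNIV \<times> UNIV"
  proof -
    have "(\<lambda>(j,k). norm z ^ j * norm w ^ k) summable_on UNIV \<times> UNIV"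
      using z w by (intro geom2_summable) auto
    then have s1: "(\<lambda>x. K * (case x of (j,k) \<Rightarrow> norm z ^ j * norm w ^ k)) summable_on UNIV \<times> UNIV"
      by (rule summable_on_cmult_right)
    have "(\<lambda>x. norm (G x)) summable_on UNIV \<times> UNIV"
    proof (rule Infinite_Sum.abs_summable_on_comparison_test'[OF s1])
      show "norm (G x) \<le> K * (case x of (j,k) \<Rightarrow> norm z ^ j * norm w ^ k)" for x
        using Gb by (cases x) auto
    qed
    then show ?thesis by (rule abs_summable_summable)
  qed
  define T where "T = infsum G (UNIV \<times> UNIV)"
  have GT: "(G has_sum T) (UNIV \<times> UNIV)" unfolding T_def using Gsum by (rule has_sum_infsum)
  have znz: "qpoch_inf z Q \<noteq> 0"
  proof (rule qpoch_inf_nonzero[OF Q])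
    fix i
    have "norm (Q ^ i * z) < 1" by (intro norm_mult_lt1 norm_pow_le1 Q z)
    then show "1 - z * Q ^ i \<noteq> 0" by (auto simp: mult.commute)
  qed
  have Cnz: "C \<noteq> 0"
  proof -
    have "qpoch_inf (b * z) Q \<noteq> 0" using qpoch_inf_nonzero[OF Q] hbz by blast
    then show ?thesis using znz by (simp add: C_def)
  qed
  have row: "((\<lambda>j. G (j,k)) has_sum (C * d k)) UNIV" for k
  proof (rule norm_summable_imp_has_sum)
    show "summable (\<lambda>j. norm (G (j,k)))"
    proof (rule summable_comparison_test')
      show "summable (\<lambda>j. K * norm w ^ k * norm z ^ j)"
        using z by (intro summable_mult summable_geometric) auto
      show "norm (norm (G (j, k))) \<le> K * norm w ^ k * norm z ^ j" for j
        using Gb[of j k] by (simp add: mult_ac)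
    qed
    have qb: "(\<lambda>j. qpoch (b * Q ^ k) Q j / qpoch Q Q j * z ^ j) sums
               (qpoch_inf (b * Q ^ k * z) Q / qpoch_inf z Q)"
      by (rule qbinomial_thm[OF Q z])
    have split: "qpoch_inf (b * z) Q = qpoch (b * z) Q k * qpoch_inf (b * z * Q ^ k) Q"
      using qpoch_inf_split[OF Q, of "b * z" k] by simp
    have bzk: "b * Q ^ k * z = b * z * Q ^ k" by (simp add: mult_ac)
    have "(\<lambda>j. (qpoch b Q k * inverse (qpoch Q Q k) * A k * w ^ k) * (qpoch (b * Q ^ k) Q j / qpoch Q Q j * z ^ j))
          sums ((qpoch b Q k * inverse (qpoch Q Q k) * A k * w ^ k) * (qpoch_inf (b * Q ^ k * z) Q / qpoch_inf z Q))"
      by (rule sums_mult[OF qb])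
    moreover have "(\<lambda>j. (qpoch b Q k * inverse (qpoch Q Q k) * A k * w ^ k) * (qpoch (b * Q ^ k) Q j / qpoch Q Q j * z ^ j))
                   = (\<lambda>j. G (j,k))"
      by (rule ext) (simp only: G_def case_prod_conv row_eq_aux)
    moreover have "(qpoch b Q k * inverse (qpoch Q Q k) * A k * w ^ k) * (qpoch_inf (b * Q ^ k * z) Q / qpoch_inf z Q)
                   = C * d k"
      unfolding C_def d_def A_def split bzk
      by (rule row_eq_aux2[OF znz qqnz unz vnz bznz])
    ultimately show "(\<lambda>j. G (j,k)) sums (C * d k)" by simp
  qed
  have "((\<lambda>(k,j). G (j,k)) has_sum T) (UNIV \<times> UNIV)"
    using GT by (subst has_sum_reindex_bij_witness[where i=prod.swap and j=prod.swap and T="UNIV \<times> UNIV" and h=G and s'=T]) auto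
  then have "((\<lambda>k. C * d k) has_sum T) UNIV"
    by (rule has_sum_SigmaD) (use row in auto)
  then have "(\<lambda>k. C * d k) sums T" by (rule has_sum_imp_sums)
  then have "(\<lambda>k. inverse C * (C * d k)) sums (inverse C * T)" by (rule sums_mult)
  moreover have "(\<lambda>k. inverse C * (C * d k)) = d" using Cnz by (auto simp: fun_eq_iff)
  ultimately have "d sums (inverse C * T)" by simp
  then have Tval: "T = C * suminf d" using Cnz by (simp add: sums_iff)
  have "((\<lambda>(M,k). G (M - k, k)) has_sum T) (SIGMA M:UNIV. {..M})"
    using GT by (subst has_sum_reindex_bij_witness[where j="\<lambda>(M,k). (M-k,k)" and i="\<lambda>(j,k). (j+k,k)" and T="UNIV \<times> UNIV" and h=G and s'=T]) auto
  then have "((\<lambda>M. \<Sum>k\<le>M. G (M - k, k)) has_sum T) UNIV"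
    by (rule has_sum_SigmaD) auto
  then have diag: "(\<lambda>M. \<Sum>k\<le>M. G (M - k, k)) sums T" by (rule has_sum_imp_sums)
  have "(\<Sum>k\<le>M. G (M - k, k)) = inverse (qpoch Q Q M) * qpoch b Q M * qphi r s t u v M z w Q" for M
  proof -
    have "inverse (qpoch Q Q M) * qpoch b Q M * qphi r s t u v M z w Q
       = (\<Sum>k\<le>M. inverse (qpoch Q Q M) * qpoch b Q M * (qbinom Q M k * (qpoch r Q k * qpoch s Q k * qpoch t Q k)
              / (qpoch u Q k * qpoch v Q k) * z ^ (M - k) * w ^ k))"
      by (simp add: qphi_def sum_distrib_left)
    also have "\<dots> = (\<Sum>k\<le>M. G (M - k, k))"
    proof (rule sum.cong[OF refl])
      fix k assume "k \<in> {..M}"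
      then have "M - k + k = M" by simp
      show "inverse (qpoch Q Q M) * qpoch b Q M * (qbinom Q M k * (qpoch r Q k * qpoch s Q k * qpoch t Q k)
              / (qpoch u Q k * qpoch v Q k) * z ^ (M - k) * w ^ k) = G (M - k, k)"
        unfolding G_def A_def case_prod_conv
        by (rule diag_eq_aux) (use qqnz \<open>k \<in> {..M}\<close> in auto)
    qed
    finally show ?thesis by simp
  qed
  with diag have "(\<lambda>M. inverse (qpoch Q Q M) * qpoch b Q M * qphi r s t u v M z w Q) sums T"
    by simp
  then show ?thesis using Tval unfolding C_def d_def by simp
qed

lemma prod_linear_degree_lead:
  fixes z :: "nat \<Rightarrow> complex"
  assumes "finite T"
  shows "degree (\<Prod>j\<in>T. [:- z j, 1:]) = card T \<and> coeff (\<Prod>j\<in>T. [:- z j, 1:]) (card T) = 1"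
proof -
  have d: "degree (\<Prod>j\<in>T. [:- z j, 1:]) = card T"
    by (subst degree_prod_eq_sum_degree) auto
  have "lead_coeff (\<Prod>j\<in>T. [:- z j, 1:]) = 1"
    by (simp add: lead_coeff_prod)
  with d show ?thesis by simp
qed

lemma lagrange_coeff:
  fixes z :: "nat \<Rightarrow> complex" and p :: "complex poly"
  assumes fin: "finite S" and card: "card S = Suc d" and inj: "inj_on z S" and deg: "degree p \<le> d"
  shows "(\<Sum>k\<in>S. poly p (z k) / (\<Prod>j\<in>S-{k}. (z k - z j))) = coeff p d"
proof -
  define D where "D k = (\<Prod>j\<in>S-{k}. (z k - z j))" for k
  define P where "P k = (\<Prod>j\<in>S-{k}. [:- z j, 1:])" for k
  define L where "L = (\<Sum>k\<in>S. smult (poly p (z k) / D k) (P k))"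
  have Dnz: "D k \<noteq> 0" if "k \<in> S" for k
    unfolding D_def using fin inj that by (auto simp: inj_on_def)
  have Pdeg: "degree (P k) = d" and Pco: "coeff (P k) d = 1" if "k \<in> S" for k
  proof -
    have c: "card (S - {k}) = d" using card that fin by simp
    show "degree (P k) = d" "coeff (P k) d = 1"
      using prod_linear_degree_lead[of "S - {k}" z] fin c unfolding P_def by auto
  qed
  have Ldeg: "degree L \<le> d"
    unfolding L_def
    by (rule degree_sum_le[OF fin]) (use Pdeg in \<open>auto intro: order.trans[OF degree_smult_le]\<close>)
  have Lpoly: "poly L (z i) = poly p (z i)" if i: "i \<in> S" for i
  proof -
    have "poly L (z i) = (\<Sum>k\<in>S. poly p (z k) / D k * poly (P k) (z i))"
      by (simp add: L_def poly_sum)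
    also have "\<dots> = (\<Sum>k\<in>S. if k = i then poly p (z i) else 0)"
    proof (rule sum.cong[OF refl])
      fix k assume k: "k \<in> S"
      show "poly p (z k) / D k * poly (P k) (z i) = (if k = i then poly p (z i) else 0)"
      proof (cases "k = i")
        case True
        have "poly (P k) (z i) = D k" unfolding P_def D_def True by (simp add: poly_prod)
        then show ?thesis using True Dnz[OF k] by simp
      next
        case False
        have "poly (P k) (z i) = (\<Prod>j\<in>S-{k}. z i - z j)" unfolding P_def by (simp add: poly_prod)
        also have "\<dots> = 0" using fin i False by (intro prod_zero) auto
        finally show ?thesis using False by simp
      qed
    qed
    also have "\<dots> = poly p (z i)" using i fin by simp
    finally show ?thesis .
  qed
  have "p = L"
  proof (rule poly_eqI_degree[where A="z ` S"])
    show "poly p x = poly L x" if "x \<in> z ` S" for x using that Lpoly by auto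
    have "card (z ` S) = Suc d" using card inj by (simp add: card_image)
    then show "degree p < card (z ` S)" "degree L < card (z ` S)" using deg Ldeg by auto
  qed
  then have "coeff p d = coeff L d" by simp
  also have "\<dots> = (\<Sum>k\<in>S. poly p (z k) / D k * coeff (P k) d)"
    unfolding L_def by (simp add: coeff_sum)
  also have "\<dots> = (\<Sum>k\<in>S. poly p (z k) / D k)"
    by (rule sum.cong) (auto simp: Pco)
  finally show ?thesis unfolding D_def by simp
qed

lemma pair_prod_update:
  fixes f f' :: "nat \<Rightarrow> nat \<Rightarrow> 'a::comm_monoid_mult"
  assumes k: "k \<in> {1..n}"
    and upd: "\<And>i j. i \<in> {1..n} \<Longrightarrow> j \<in> {i+1..n} \<Longrightarrow>
                 f' i j = f i j * (if i = k then g j else if j = k then h i else 1)"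
  shows "(\<Prod>i\<in>{1..n}. \<Prod>j\<in>{i+1..n}. f' i j)
           = (\<Prod>i\<in>{1..n}. \<Prod>j\<in>{i+1..n}. f i j) * ((\<Prod>j\<in>{k+1..n}. g j) * (\<Prod>i\<in>{1..<k}. h i))"
proof -
  define e where "e i j = (if i = k then g j else if j = k then h i else 1)" for i j
  have "(\<Prod>i\<in>{1..n}. \<Prod>j\<in>{i+1..n}. f' i j) = (\<Prod>i\<in>{1..n}. \<Prod>j\<in>{i+1..n}. f i j * e i j)"
    using upd unfolding e_def by (intro prod.cong refl) auto
  also have "\<dots> = (\<Prod>i\<in>{1..n}. \<Prod>j\<in>{i+1..n}. f i j) * (\<Prod>i\<in>{1..n}. \<Prod>j\<in>{i+1..n}. e i j)"
    by (simp add: prod.distrib)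
  also have "(\<Prod>i\<in>{1..n}. \<Prod>j\<in>{i+1..n}. e i j)
      = (\<Prod>i\<in>{1..n}. (if i = k then (\<Prod>j\<in>{k+1..n}. g j) else 1) * (if i < k then h i else 1))"
  proof (rule prod.cong[OF refl])
    fix i assume i: "i \<in> {1..n}"
    show "(\<Prod>j\<in>{i+1..n}. e i j) = (if i = k then (\<Prod>j\<in>{k+1..n}. g j) else 1) * (if i < k then h i else 1)"
    proof (cases "i = k")
      case True then show ?thesis by (simp add: e_def)
    next
      case False
      then have "(\<Prod>j\<in>{i+1..n}. e i j) = (\<Prod>j\<in>{i+1..n}. if j = k then h i else 1)"
        by (simp add: e_def)
      also have "\<dots> = (if k \<in> {i+1..n} then h i else 1)"
        by simp
      finally show ?thesis using False k by auto
    qed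
  qed
  also have "\<dots> = (\<Prod>i\<in>{1..n}. if i = k then (\<Prod>j\<in>{k+1..n}. g j) else 1) * (\<Prod>i\<in>{1..n}. if i < k then h i else 1)"
    by (rule prod.distrib)
  also have "(\<Prod>i\<in>{1..n}. if i = k then (\<Prod>j\<in>{k+1..n}. g j) else 1) = (\<Prod>j\<in>{k+1..n}. g j)"
    using k by (simp add: prod.delta')
  also have "(\<Prod>i\<in>{1..n}. if i < k then h i else 1) = (\<Prod>i\<in>{i\<in>{1..n}. i < k}. h i)"
    by (rule prod.inter_filter[symmetric]) simp
  also have "{i\<in>{1..n}. i < k} = {1..<k}" using k by auto
  finally show ?thesis .
qed

lemma pair_sum_update:
  fixes f f' :: "nat \<Rightarrow> nat \<Rightarrow> 'a::comm_monoid_add"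
  assumes k: "k \<in> {1..n}"
    and upd: "\<And>i j. i \<in> {1..n} \<Longrightarrow> j \<in> {i+1..n} \<Longrightarrow>
                 f' i j = f i j + (if i = k then g j else if j = k then h i else 0)"
  shows "(\<Sum>i\<in>{1..n}. \<Sum>j\<in>{i+1..n}. f' i j)
           = (\<Sum>i\<in>{1..n}. \<Sum>j\<in>{i+1..n}. f i j) + ((\<Sum>j\<in>{k+1..n}. g j) + (\<Sum>i\<in>{1..<k}. h i))"
proof -
  define e where "e i j = (if i = k then g j else if j = k then h i else 0)" for i j
  have "(\<Sum>i\<in>{1..n}. \<Sum>j\<in>{i+1..n}. f' i j) = (\<Sum>i\<in>{1..n}. \<Sum>j\<in>{i+1..n}. f i j + e i j)"
    using upd unfolding e_def by (intro sum.cong refl) auto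
  also have "\<dots> = (\<Sum>i\<in>{1..n}. \<Sum>j\<in>{i+1..n}. f i j) + (\<Sum>i\<in>{1..n}. \<Sum>j\<in>{i+1..n}. e i j)"
    by (simp add: sum.distrib)
  also have "(\<Sum>i\<in>{1..n}. \<Sum>j\<in>{i+1..n}. e i j)
      = (\<Sum>i\<in>{1..n}. (if i = k then (\<Sum>j\<in>{k+1..n}. g j) else 0) + (if i < k then h i else 0))"
  proof (rule sum.cong[OF refl])
    fix i assume i: "i \<in> {1..n}"
    show "(\<Sum>j\<in>{i+1..n}. e i j) = (if i = k then (\<Sum>j\<in>{k+1..n}. g j) else 0) + (if i < k then h i else 0)"
    proof (cases "i = k")
      case True then show ?thesis by (simp add: e_def)
    next
      case False
      then have "(\<Sum>j\<in>{i+1..n}. e i j) = (\<Sum>j\<in>{i+1..n}. if j = k then h i else 0)"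
        by (simp add: e_def)
      also have "\<dots> = (if k \<in> {i+1..n} then h i else 0)"
        by simp
      finally show ?thesis using False k by auto
    qed
  qed
  also have "\<dots> = (\<Sum>i\<in>{1..n}. if i = k then (\<Sum>j\<in>{k+1..n}. g j) else 0) + (\<Sum>i\<in>{1..n}. if i < k then h i else 0)"
    by (rule sum.distrib)
  also have "(\<Sum>i\<in>{1..n}. if i = k then (\<Sum>j\<in>{k+1..n}. g j) else 0) = (\<Sum>j\<in>{k+1..n}. g j)"
    using k by (simp add: sum.delta')
  also have "(\<Sum>i\<in>{1..n}. if i < k then h i else 0) = (\<Sum>i\<in>{i\<in>{1..n}. i < k}. h i)"
    by (rule sum.inter_filter[symmetric]) simp
  also have "{i\<in>{1..n}. i < k} = {1..<k}" using k by auto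
  finally show ?thesis .
qed

lemma split_minus_k:
  fixes k n :: nat
  assumes "k \<in> {1..n}"
  shows "{1..n} - {k} = {1..<k} \<union> {k+1..n}" "{1..<k} \<inter> {k+1..n} = {}"
  using assms by auto

lemma prod_minus_k:
  fixes g :: "nat \<Rightarrow> 'a::comm_monoid_mult"
  assumes "k \<in> {1..n}"
  shows "(\<Prod>j\<in>{1..n}-{k}. g j) = (\<Prod>j\<in>{k+1..n}. g j) * (\<Prod>j\<in>{1..<k}. g j)"
  unfolding split_minus_k[OF assms] by (subst prod.union_disjoint) (use assms in \<open>auto simp: mult.commute\<close>)

lemma sum_minus_k:
  fixes g :: "nat \<Rightarrow> 'a::comm_monoid_add"
  assumes "k \<in> {1..n}"
  shows "(\<Sum>j\<in>{1..n}-{k}. g j) = (\<Sum>j\<in>{k+1..n}. g j) + (\<Sum>j\<in>{1..<k}. g j)"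
  unfolding split_minus_k[OF assms] by (subst sum.union_disjoint) (use assms in \<open>auto simp: add.commute\<close>)

lemma upd_sum:
  fixes m :: "nat \<Rightarrow> nat"
  assumes "k \<in> {1..n}"
  shows "(\<Sum>i\<in>{1..n}. (m(k := Suc (m k))) i) = Suc (\<Sum>i\<in>{1..n}. m i)"
proof -
  have "(\<Sum>i\<in>{1..n}. (m(k := Suc (m k))) i) = Suc (m k) + (\<Sum>i\<in>{1..n}-{k}. (m(k := Suc (m k))) i)"
    using assms by (subst sum.remove[of _ k]) auto
  also have "(\<Sum>i\<in>{1..n}-{k}. (m(k := Suc (m k))) i) = (\<Sum>i\<in>{1..n}-{k}. m i)"
    by (rule sum.cong) auto
  also have "Suc (m k) + \<dots> = Suc (\<Sum>i\<in>{1..n}. m i)"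
    using assms by (subst (2) sum.remove[of _ k]) auto
  finally show ?thesis .
qed

definition WA :: "complex \<Rightarrow> nat \<Rightarrow> (nat \<Rightarrow> complex) \<Rightarrow> (nat \<Rightarrow> nat) \<Rightarrow> complex" where
  "WA Q n x m = (\<Prod>i\<in>{1..n}. \<Prod>j\<in>{i+1..n}.
            (1 - x i / x j * Q powi (int (m i) - int (m j))) / (1 - x i / x j))"
definition WB :: "complex \<Rightarrow> nat \<Rightarrow> (nat \<Rightarrow> complex) \<Rightarrow> (nat \<Rightarrow> nat) \<Rightarrow> complex" where
  "WB Q n x m = (\<Prod>i\<in>{1..n}. \<Prod>j\<in>{1..n}. qpoch (Q * x i / x j) Q (m i))"
definition WC :: "nat \<Rightarrow> (nat \<Rightarrow> complex) \<Rightarrow> (nat \<Rightarrow> nat) \<Rightarrow> complex" where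
  "WC n x m = (\<Prod>i\<in>{1..n}. x i powi (int n * int (m i) - int (\<Sum>i\<in>{1..n}. m i)))"
definition WD :: "nat \<Rightarrow> (nat \<Rightarrow> nat) \<Rightarrow> complex" where
  "WD n m = (-1) ^ ((n - 1) * (\<Sum>i\<in>{1..n}. m i))"
definition e2 :: "nat \<Rightarrow> (nat \<Rightarrow> nat) \<Rightarrow> nat" where
  "e2 n m = (\<Sum>i\<in>{1..n}. \<Sum>j\<in>{i+1..n}. m i * m j)"
definition WEx :: "nat \<Rightarrow> (nat \<Rightarrow> nat) \<Rightarrow> int" where
  "WEx n m = int (\<Sum>i\<in>{1..n}. (i - 1) * m i) + int (n - 1) * int (\<Sum>i\<in>{1..n}. m i choose 2) - int (e2 n m)"

lemma Wt_split:
  "Wt q n x m = WA (complex_of_real q) n x m * inverse (WB (complex_of_real q) n x m) * WC n x m * WD n m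
                  * complex_of_real q powi WEx n m"
  by (simp add: Wt_def Let_def WA_def WB_def WC_def WD_def WEx_def e2_def)

lemma prod_upd:
  fixes F :: "nat \<Rightarrow> nat \<Rightarrow> 'a::comm_monoid_mult"
  assumes "finite S" "k \<in> S" "F k v = F k (m k) * c"
  shows "(\<Prod>i\<in>S. F i ((m(k := v)) i)) = (\<Prod>i\<in>S. F i (m i)) * c"
proof -
  have "(\<Prod>i\<in>S. F i ((m(k := v)) i)) = F k v * (\<Prod>i\<in>S-{k}. F i ((m(k := v)) i))"
    using assms by (subst prod.remove[of _ k]) auto
  also have "(\<Prod>i\<in>S-{k}. F i ((m(k := v)) i)) = (\<Prod>i\<in>S-{k}. F i (m i))"
    by (rule prod.cong) auto
  also have "F k v * \<dots> = (F k (m k) * (\<Prod>i\<in>S-{k}. F i (m i))) * c"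
    using assms by (simp add: mult_ac)
  also have "F k (m k) * (\<Prod>i\<in>S-{k}. F i (m i)) = (\<Prod>i\<in>S. F i (m i))"
    using assms by (subst prod.remove[of _ k]) auto
  finally show ?thesis .
qed

lemma sum_upd:
  fixes F :: "nat \<Rightarrow> nat \<Rightarrow> 'a::comm_monoid_add"
  assumes "finite S" "k \<in> S" "F k v = F k (m k) + c"
  shows "(\<Sum>i\<in>S. F i ((m(k := v)) i)) = (\<Sum>i\<in>S. F i (m i)) + c"
proof -
  have "(\<Sum>i\<in>S. F i ((m(k := v)) i)) = F k v + (\<Sum>i\<in>S-{k}. F i ((m(k := v)) i))"
    using assms by (subst sum.remove[of _ k]) auto
  also have "(\<Sum>i\<in>S-{k}. F i ((m(k := v)) i)) = (\<Sum>i\<in>S-{k}. F i (m i))"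
    by (rule sum.cong) auto
  also have "F k v + \<dots> = (F k (m k) + (\<Sum>i\<in>S-{k}. F i (m i))) + c"
    using assms by (simp add: add_ac)
  also have "F k (m k) + (\<Sum>i\<in>S-{k}. F i (m i)) = (\<Sum>i\<in>S. F i (m i))"
    using assms by (subst sum.remove[of _ k]) auto
  finally show ?thesis .
qed

lemma powi_nat_diff:
  fixes Q :: complex
  assumes "Q \<noteq> 0"
  shows "Q powi (int a - int b) = Q ^ a / Q ^ b"
  using assms by (simp add: power_int_diff)

lemma alg1:
  fixes a bb A B Q :: complex
  assumes "bb \<noteq> 0" "Q \<noteq> 0" "B \<noteq> 0" "A \<noteq> 0" "a * A \<noteq> bb * B" "a \<noteq> bb"
  shows "(1 - a / bb * (Q * A / B)) / (1 - a / bb) = (1 - a / bb * (A / B)) / (1 - a / bb) * ((Q * (a * A) - bb * B) / (a * A - bb * B))"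
proof -
  have d: "a * A - bb * B \<noteq> 0" using assms by auto
  have e1: "1 - a / bb * (A / B) = - (a * A - bb * B) / (bb * B)" using assms by (simp add: field_simps)
  have e2: "1 - a / bb * (Q * A / B) = - (Q * (a * A) - bb * B) / (bb * B)" using assms by (simp add: field_simps)
  have "- (a * A - bb * B) / (bb * B) * ((Q * (a * A) - bb * B) / (a * A - bb * B)) = - (Q * (a * A) - bb * B) / (bb * B)"
    using d by (simp add: divide_simps) (simp add: algebra_simps)
  then show ?thesis unfolding e1 e2 using assms d by (simp add: divide_simps)
qed

lemma alg2:
  fixes a c A C Q :: complex
  assumes "a \<noteq> 0" "Q \<noteq> 0" "A \<noteq> 0" "C \<noteq> 0" "a * A \<noteq> c * C" "c \<noteq> a"
  shows "(1 - c / a * (C / (Q * A))) / (1 - c / a) = (1 - c / a * (C / A)) / (1 - c / a) * ((Q * (a * A) - c * C) / (Q * (a * A - c * C)))"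
proof -
  have d: "a * A - c * C \<noteq> 0" using assms by auto
  have e1: "1 - c / a * (C / A) = (a * A - c * C) / (a * A)" using assms by (simp add: field_simps)
  have e2: "1 - c / a * (C / (Q * A)) = (Q * (a * A) - c * C) / (Q * (a * A))" using assms by (simp add: field_simps)
  have "(a * A - c * C) / (a * A) * ((Q * (a * A) - c * C) / (Q * (a * A - c * C))) = (Q * (a * A) - c * C) / (Q * (a * A))"
    using d assms by (simp add: divide_simps)
  then show ?thesis unfolding e1 e2 using assms d by (simp add: divide_simps)
qed

lemma alg3:
  fixes Q y xk P0 P1 PX X a b c d e :: complex
  assumes "Q \<noteq> 0" "y \<noteq> 0" "P0 \<noteq> 0" "P1 \<noteq> 0" "PX \<noteq> 0" "X \<noteq> 0" "n \<ge> 1"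
    and y: "y = xk * Q ^ s"
  shows "- (Q ^ Suc M) * ((-1) ^ n * PX) / (Q * y * P1) *
     ((a * ((P1 / P0) / Q ^ (k - 1))) * inverse (b * (PX * inverse X)) * (c * (xk ^ n * inverse X))
      * (d * (-1) ^ (n - 1)) * (e * (Q ^ (k - 1) * Q ^ (n * s) / Q ^ M)))
   = y ^ (n - 1) / P0 * (a * inverse b * c * d * e)"
proof -
  obtain n' where n: "n = Suc n'" using assms(7) by (cases n) auto
  have yn: "y ^ n = xk ^ n * Q ^ (n * s)" unfolding y power_mult_distrib mult.commute[of n s] power_mult by simp
  have yn1: "y ^ (n - 1) = y ^ n / y" using assms(2) n by simp
  show ?thesis unfolding yn1 yn using assms n
    by (simp add: field_simps)
qed

locale Wsetup =
  fixes Q :: complex and n :: nat and x :: "nat \<Rightarrow> complex"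
  assumes Qnz: "Q \<noteq> 0" and Qn1: "\<And>l. Q ^ Suc l \<noteq> 1" and n1: "n \<ge> 1"
    and xnz: "\<And>i. i \<in> {1..n} \<Longrightarrow> x i \<noteq> 0"
    and xgen: "\<And>i j k. i \<in> {1..n} \<Longrightarrow> j \<in> {1..n} \<Longrightarrow> i \<noteq> j \<Longrightarrow> x i / x j \<noteq> Q powi k"
begin

definition Y :: "(nat \<Rightarrow> nat) \<Rightarrow> nat \<Rightarrow> complex" where "Y m i = x i * Q ^ m i"

lemma Y_nz: "i \<in> {1..n} \<Longrightarrow> Y m i \<noteq> 0"
  using xnz Qnz by (simp add: Y_def)

lemma Y_neq_gen: 
  assumes "i \<in> {1..n}" "j \<in> {1..n}" "i \<noteq> j"
  shows "x i * Q ^ a \<noteq> x j * Q ^ b"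
proof
  assume "x i * Q ^ a = x j * Q ^ b"
  then have "x i / x j = Q ^ b / Q ^ a"
    using xnz[OF assms(1)] xnz[OF assms(2)] Qnz by (simp add: field_simps)
  also have "\<dots> = Q powi (int b - int a)" using Qnz by (simp add: power_int_diff)
  finally show False using xgen[OF assms] by blast
qed

lemma Y_inj: "inj_on (Y m) {1..n}"
  unfolding inj_on_def Y_def using Y_neq_gen by blast

lemma x_neq: "i \<in> {1..n} \<Longrightarrow> j \<in> {1..n} \<Longrightarrow> i \<noteq> j \<Longrightarrow> x i \<noteq> x j"
  using Y_neq_gen[of i j 0 0] by simp

lemma WA_step:
  assumes k: "k \<in> {1..n}"
  shows "WA Q n x (m(k := Suc (m k))) = WA Q n x m *
           ((\<Prod>j\<in>{1..n}-{k}. (Q * Y m k - Y m j) / (Y m k - Y m j)) / Q ^ (k - 1))"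
proof -
  define g where "g j = (Q * Y m k - Y m j) / (Y m k - Y m j)" for j
  define h where "h i = (Q * Y m k - Y m i) / (Q * (Y m k - Y m i))" for i
  have "WA Q n x (m(k := Suc (m k))) = WA Q n x m * ((\<Prod>j\<in>{k+1..n}. g j) * (\<Prod>i\<in>{1..<k}. h i))"
    unfolding WA_def
  proof (rule pair_prod_update[OF k])
    fix i j assume i: "i \<in> {1..n}" and j: "j \<in> {i+1..n}"
    then have jn: "j \<in> {1..n}" and ij: "i \<noteq> j" by auto
    show "(1 - x i / x j * Q powi (int ((m(k := Suc (m k))) i) - int ((m(k := Suc (m k))) j))) / (1 - x i / x j) =
          (1 - x i / x j * Q powi (int (m i) - int (m j))) / (1 - x i / x j) *
          (if i = k then g j else if j = k then h i else 1)"
    proof (cases "i = k")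
      case True
      then have "j \<noteq> k" using ij by auto
      then show ?thesis using True
        unfolding powi_nat_diff[OF Qnz] g_def Y_def
        using alg1[of "x j" Q "Q ^ m j" "Q ^ m k" "x k"] xnz[OF jn] Qnz Y_neq_gen[of k j "m k" "m j"] k jn
          x_neq[of k j] ij
        by (simp add: power_Suc)
    next
      case False
      show ?thesis
      proof (cases "j = k")
        case True
        then show ?thesis using False
          unfolding powi_nat_diff[OF Qnz] h_def Y_def
          using alg2[of "x k" Q "Q ^ m k" "Q ^ m i" "x i"] xnz[OF k] Qnz Y_neq_gen[of k i "m k" "m i"] k i
            x_neq[of i k] ij
          by (simp add: power_Suc)
      next
        case False2: False
        then show ?thesis using False by simp
      qed
    qed
  qed
  also have "(\<Prod>i\<in>{1..<k}. h i) = (\<Prod>i\<in>{1..<k}. g i) / Q ^ (k - 1)"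
    by (simp add: h_def g_def prod_dividef prod.distrib)
  also have "(\<Prod>j\<in>{k+1..n}. g j) * ((\<Prod>i\<in>{1..<k}. g i) / Q ^ (k - 1)) = (\<Prod>j\<in>{1..n}-{k}. g j) / Q ^ (k - 1)"
    by (subst prod_minus_k[OF k]) simp
  finally show ?thesis unfolding g_def .
qed

lemma WB_step:
  assumes k: "k \<in> {1..n}"
  shows "WB Q n x (m(k := Suc (m k))) = WB Q n x m * (\<Prod>j\<in>{1..n}. 1 - Q * x k / x j * Q ^ m k)"
  unfolding WB_def
proof (rule prod_upd[where F="\<lambda>i v. \<Prod>j\<in>{1..n}. qpoch (Q * x i / x j) Q v"])
  show "(\<Prod>j\<in>{1..n}. qpoch (Q * x k / x j) Q (Suc (m k))) =
        (\<Prod>j\<in>{1..n}. qpoch (Q * x k / x j) Q (m k)) * (\<Prod>j\<in>{1..n}. 1 - Q * x k / x j * Q ^ m k)"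
    by (simp add: qpoch_Suc prod.distrib)
qed (use k in auto)

lemma WC_step:
  assumes k: "k \<in> {1..n}"
  shows "WC n x (m(k := Suc (m k))) = WC n x m * (x k ^ n * inverse (\<Prod>i\<in>{1..n}. x i))"
proof -
  define M where "M = (\<Sum>i\<in>{1..n}. m i)"
  have "WC n x (m(k := Suc (m k))) = (\<Prod>i\<in>{1..n}. x i powi (int n * int ((m(k := Suc (m k))) i) - int (Suc M)))"
    unfolding WC_def upd_sum[OF k] M_def ..
  also have "\<dots> = (\<Prod>i\<in>{1..n}. x i powi (int n * int (m i) - int M) * ((if i = k then x i ^ n else 1) * inverse (x i)))"
  proof (rule prod.cong[OF refl])
    fix i assume i: "i \<in> {1..n}"
    have e: "int n * int ((m(k := Suc (m k))) i) - int (Suc M) = (int n * int (m i) - int M) + (int (if i = k then n else 0) - 1)"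
      by (auto simp: algebra_simps)
    show "x i powi (int n * int ((m(k := Suc (m k))) i) - int (Suc M)) =
          x i powi (int n * int (m i) - int M) * ((if i = k then x i ^ n else 1) * inverse (x i))"
      unfolding e using xnz[OF i]
      by (simp add: power_int_add power_int_diff divide_inverse)
  qed
  also have "\<dots> = WC n x m * ((\<Prod>i\<in>{1..n}. if i = k then x i ^ n else 1) * (\<Prod>i\<in>{1..n}. inverse (x i)))"
    unfolding WC_def M_def by (simp add: prod.distrib)
  also have "(\<Prod>i\<in>{1..n}. if i = k then x i ^ n else 1) = x k ^ n"
    using k by simp
  also have "(\<Prod>i\<in>{1..n}. inverse (x i)) = inverse (\<Prod>i\<in>{1..n}. x i)"
    using prod_inversef[of x "{1..n}"] by (simp add: o_def)
  finally show ?thesis .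
qed

lemma WD_step:
  assumes k: "k \<in> {1..n}"
  shows "WD n (m(k := Suc (m k))) = WD n m * (-1) ^ (n - 1)"
  unfolding WD_def upd_sum[OF k] by (simp add: power_add)

lemma WEx_step:
  assumes k: "k \<in> {1..n}"
  shows "WEx n (m(k := Suc (m k))) = WEx n m + int (k - 1) + int n * int (m k) - int (\<Sum>i\<in>{1..n}. m i)"
proof -
  let ?m = "m(k := Suc (m k))"
  have s1: "(\<Sum>i\<in>{1..n}. (i - 1) * ?m i) = (\<Sum>i\<in>{1..n}. (i - 1) * m i) + (k - 1)"
    by (rule sum_upd[where F="\<lambda>i v. (i - 1) * v"]) (use k in auto)
  have s2: "(\<Sum>i\<in>{1..n}. ?m i choose 2) = (\<Sum>i\<in>{1..n}. m i choose 2) + m k"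
    by (rule sum_upd[where F="\<lambda>i v. v choose 2"]) (use k in \<open>auto simp: numeral_2_eq_2\<close>)
  have s3: "e2 n ?m = e2 n m + ((\<Sum>j\<in>{k+1..n}. m j) + (\<Sum>i\<in>{1..<k}. m i))"
    unfolding e2_def
  proof (rule pair_sum_update[OF k])
    fix i j assume "i \<in> {1..n}" "j \<in> {i+1..n}"
    then show "?m i * ?m j = m i * m j + (if i = k then m j else if j = k then m i else 0)"
      by auto
  qed
  have s4: "(\<Sum>j\<in>{k+1..n}. m j) + (\<Sum>i\<in>{1..<k}. m i) + m k = (\<Sum>i\<in>{1..n}. m i)"
  proof -
    have "(\<Sum>i\<in>{1..n}. m i) = m k + (\<Sum>i\<in>{1..n}-{k}. m i)" using k by (subst sum.remove[of _ k]) auto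
    then show ?thesis using sum_minus_k[OF k, of m] by (simp add: add_ac)
  qed
  show ?thesis
  proof -
    define P where "P = (\<Sum>j\<in>{k+1..n}. m j) + (\<Sum>i\<in>{1..<k}. m i)"
    define M where "M = (\<Sum>i\<in>{1..n}. m i)"
    define A where "A = (\<Sum>i\<in>{1..n}. (i - 1) * m i)"
    define C where "C = (\<Sum>i\<in>{1..n}. m i choose 2)"
    have "P + m k = M" using s4 unfolding P_def M_def .
    then show ?thesis
      unfolding WEx_def s1 s2 s3 P_def[symmetric] M_def[symmetric] A_def[symmetric] C_def[symmetric] using n1
      by (simp add: algebra_simps of_nat_diff)
  qed
qed

definition Wc :: "(nat \<Rightarrow> nat) \<Rightarrow> complex" where
  "Wc m = WA Q n x m * inverse (WB Q n x m) * WC n x m * WD n m * Q powi WEx n m"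

definition alpha :: "nat \<Rightarrow> (nat \<Rightarrow> nat) \<Rightarrow> complex" where
  "alpha k m = - (Q ^ (\<Sum>i\<in>{1..n}. m i)) * (\<Prod>j\<in>{1..n}. Y m k - x j) / (Y m k * (\<Prod>j\<in>{1..n}-{k}. Y m k - Y m j))"

definition beta :: "nat \<Rightarrow> (nat \<Rightarrow> nat) \<Rightarrow> complex" where
  "beta k m = Y m k ^ (n - 1) / (\<Prod>j\<in>{1..n}-{k}. Y m k - Y m j)"

lemma W_step:
  assumes k: "k \<in> {1..n}"
  shows "alpha k (m(k := Suc (m k))) * Wc (m(k := Suc (m k))) = beta k m * Wc m"
proof -
  let ?m = "m(k := Suc (m k))"
  define y where "y = Y m k"
  define M where "M = (\<Sum>i\<in>{1..n}. m i)"
  define P0 where "P0 = (\<Prod>j\<in>{1..n}-{k}. y - Y m j)"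
  define P1 where "P1 = (\<Prod>j\<in>{1..n}-{k}. Q * y - Y m j)"
  define PX where "PX = (\<Prod>j\<in>{1..n}. x j - Q * y)"
  define X where "X = (\<Prod>j\<in>{1..n}. x j)"
  have Ymk: "Y ?m k = Q * y" by (simp add: Y_def y_def)
  have Ymj: "Y ?m j = Y m j" if "j \<noteq> k" for j using that by (simp add: Y_def)
  have yd: "y = x k * Q ^ m k" by (simp add: y_def Y_def)
  have ynz: "y \<noteq> 0" unfolding y_def by (rule Y_nz[OF k])
  have Xnz: "X \<noteq> 0" unfolding X_def using xnz by auto
  have P0nz: "P0 \<noteq> 0" unfolding P0_def
  proof
    assume "(\<Prod>j\<in>{1..n}-{k}. y - Y m j) = 0"
    then have "\<exists>j\<in>{1..n}-{k}. y - Y m j = 0" by (subst (asm) prod_zero_iff) auto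
    then obtain j where j: "j \<in> {1..n}" "j \<noteq> k" "y - Y m j = 0" by blast
    then have "x k * Q ^ m k = x j * Q ^ m j" by (simp add: yd Y_def)
    with Y_neq_gen[OF k j(1)] j(2) show False by metis
  qed
  have P1nz: "P1 \<noteq> 0" unfolding P1_def
  proof
    assume "(\<Prod>j\<in>{1..n}-{k}. Q * y - Y m j) = 0"
    then have "\<exists>j\<in>{1..n}-{k}. Q * y - Y m j = 0" by (subst (asm) prod_zero_iff) auto
    then obtain j where j: "j \<in> {1..n}" "j \<noteq> k" "Q * y - Y m j = 0" by blast
    then have "x k * Q ^ Suc (m k) = x j * Q ^ m j" by (simp add: yd Y_def mult_ac)
    with Y_neq_gen[OF k j(1)] j(2) show False by metis
  qed
  have PXnz: "PX \<noteq> 0" unfolding PX_def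
  proof
    assume "(\<Prod>j\<in>{1..n}. x j - Q * y) = 0"
    then have "\<exists>j\<in>{1..n}. x j - Q * y = 0" by (subst (asm) prod_zero_iff) auto
    then obtain j where j: "j \<in> {1..n}" "x j - Q * y = 0" by blast
    show False
    proof (cases "j = k")
      case True
      then have "x k * (1 - Q ^ Suc (m k)) = 0" using j by (simp add: yd algebra_simps)
      then show False using xnz[OF k] Qn1[of "m k"] by simp
    next
      case False
      have "x k * Q ^ Suc (m k) = x j * Q ^ 0" using j by (simp add: yd mult_ac)
      with Y_neq_gen[OF k j(1)] False show False by metis
    qed
  qed
  have i1: "(\<Prod>j\<in>{1..n}. Y ?m k - x j) = (-1) ^ n * PX"
  proof -
    have "(\<Prod>j\<in>{1..n}. Y ?m k - x j) = (\<Prod>j\<in>{1..n}. (-1) * (x j - Q * y))"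
      unfolding Ymk by (rule prod.cong) auto
    also have "\<dots> = (\<Prod>j\<in>{1..n}. (-1::complex)) * PX" unfolding PX_def by (rule prod.distrib)
    also have "\<dots> = (-1) ^ n * PX" by simp
    finally show ?thesis .
  qed
  have i2: "(\<Prod>j\<in>{1..n}-{k}. Y ?m k - Y ?m j) = P1"
    unfolding P1_def Ymk by (rule prod.cong) (auto simp: Ymj)
  have i3: "(\<Prod>j\<in>{1..n}-{k}. (Q * Y m k - Y m j) / (Y m k - Y m j)) = P1 / P0"
    unfolding P1_def P0_def y_def by (rule prod_dividef)
  have i4: "(\<Prod>j\<in>{1..n}. 1 - Q * x k / x j * Q ^ m k) = PX * inverse X"
  proof -
    have "(\<Prod>j\<in>{1..n}. 1 - Q * x k / x j * Q ^ m k) = (\<Prod>j\<in>{1..n}. (x j - Q * y) * inverse (x j))"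
    proof (rule prod.cong[OF refl])
      fix j assume j: "j \<in> {1..n}"
      have "x j \<noteq> 0" using xnz[OF j] .
      then show "1 - Q * x k / x j * Q ^ m k = (x j - Q * y) * inverse (x j)"
        by (simp add: yd divide_simps)
    qed
    also have "\<dots> = PX * inverse X"
      using prod_inversef[of x "{1..n}"] by (simp add: prod.distrib PX_def X_def o_def)
    finally show ?thesis .
  qed
  have i5: "Q powi WEx n ?m = Q powi WEx n m * (Q ^ (k - 1) * Q ^ (n * m k) / Q ^ M)"
    unfolding WEx_step[OF k] M_def[symmetric] using Qnz
    by (simp add: power_int_add power_int_diff flip: of_nat_mult)
  have sM: "(\<Sum>i\<in>{1..n}. ?m i) = Suc M" unfolding M_def by (rule upd_sum[OF k])
  have a1: "alpha k ?m = - (Q ^ Suc M) * ((-1) ^ n * PX) / (Q * y * P1)"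
    unfolding alpha_def sM i1 i2 by (simp only: Ymk)
  have XX: "inverse (\<Prod>j\<in>{1..n}. x j) = inverse X" unfolding X_def ..
  have w1: "Wc ?m = (WA Q n x m * ((P1 / P0) / Q ^ (k - 1))) * inverse (WB Q n x m * (PX * inverse X)) * (WC n x m * (x k ^ n * inverse X))
      * (WD n m * (-1) ^ (n - 1)) * (Q powi WEx n m * (Q ^ (k - 1) * Q ^ (n * m k) / Q ^ M))"
    unfolding Wc_def WA_step[OF k] WB_step[OF k] WC_step[OF k] WD_step[OF k] i5 i3 i4 XX ..
  have "alpha k ?m * Wc ?m =
     - (Q ^ Suc M) * ((-1) ^ n * PX) / (Q * y * P1) *
     ((WA Q n x m * ((P1 / P0) / Q ^ (k - 1))) * inverse (WB Q n x m * (PX * inverse X)) * (WC n x m * (x k ^ n * inverse X))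
      * (WD n m * (-1) ^ (n - 1)) * (Q powi WEx n m * (Q ^ (k - 1) * Q ^ (n * m k) / Q ^ M)))"
    unfolding a1 w1 ..
  also have "\<dots> = y ^ (n - 1) / P0 * (WA Q n x m * inverse (WB Q n x m) * WC n x m * WD n m * Q powi WEx n m)"
    by (rule alg3[OF Qnz ynz P0nz P1nz PXnz Xnz n1 yd])
  also have "\<dots> = beta k m * Wc m"
    unfolding beta_def Wc_def P0_def y_def ..
  finally show ?thesis .
qed

end

context Wsetup begin

lemma prod_Y: "(\<Prod>i\<in>{1..n}. Y m i) = (\<Prod>i\<in>{1..n}. x i) * Q ^ (\<Sum>i\<in>{1..n}. m i)"
  by (simp add: Y_def prod.distrib power_sum)

lemma alpha_sum:
  "(\<Sum>k\<in>{1..n}. alpha k m) = 1 - Q ^ (\<Sum>i\<in>{1..n}. m i)"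
proof -
  define z where "z i = (if i = 0 then 0 else Y m i)" for i
  define p where "p = (\<Prod>j\<in>{1..n}. [:- x j, 1:])"
  define M where "M = (\<Sum>i\<in>{1..n}. m i)"
  define X where "X = (\<Prod>j\<in>{1..n}. x j)"
  have Xnz: "X \<noteq> 0" unfolding X_def using xnz by auto
  have pd: "degree p = n" and pc: "coeff p n = 1"
    using prod_linear_degree_lead[of "{1..n}" x] unfolding p_def by auto
  have inj: "inj_on z {0..n}"
  proof (rule inj_onI)
    fix a b assume a: "a \<in> {0..n}" and b: "b \<in> {0..n}" and e: "z a = z b"
    show "a = b"
    proof (rule ccontr)
      assume ab: "a \<noteq> b"
      show False
      proof (cases "a = 0")
        case True
        then have b1: "b \<in> {1..n}" using b ab by auto
        have "Y m b = 0" using e True ab by (simp add: z_def)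
        then show False using Y_nz[OF b1] by simp
      next
        case False
        then have a1: "a \<in> {1..n}" using a by auto
        show False
        proof (cases "b = 0")
          case True
          have "Y m a = 0" using e True ab by (simp add: z_def)
          then show False using Y_nz[OF a1] by simp
        next
          case b0: False
          then have b1: "b \<in> {1..n}" using b by auto
          have yy: "Y m a = Y m b" using e False b0 by (simp add: z_def)
          show False using inj_onD[OF Y_inj yy a1 b1] ab by blast
        qed
      qed
    qed
  qed
  have L: "(\<Sum>k\<in>{0..n}. poly p (z k) / (\<Prod>j\<in>{0..n}-{k}. (z k - z j))) = 1"
    using lagrange_coeff[of "{0..n}" n z p] inj pd pc by simp
  have e0: "{0..n} = insert 0 {1..n}" by auto
  have t0: "poly p (z 0) / (\<Prod>j\<in>{0..n}-{0}. (z 0 - z j)) = 1 / Q ^ M"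
  proof -
    have "{0..n}-{0} = {1..n}" by auto
    then have "(\<Prod>j\<in>{0..n}-{0}. (z 0 - z j)) = (\<Prod>j\<in>{1..n}. (-1) * Y m j)"
      by (auto simp: z_def intro!: prod.cong)
    also have "\<dots> = (\<Prod>j\<in>{1..n}. (-1::complex)) * (\<Prod>j\<in>{1..n}. Y m j)" by (rule prod.distrib)
    also have "\<dots> = (-1) ^ n * (X * Q ^ M)"
      unfolding prod_Y X_def M_def by simp
    finally have d: "(\<Prod>j\<in>{0..n}-{0}. (z 0 - z j)) = (-1) ^ n * (X * Q ^ M)" .
    have "poly p (z 0) = (\<Prod>j\<in>{1..n}. (-1) * x j)"
      by (simp add: p_def z_def poly_prod)
    also have "\<dots> = (\<Prod>j\<in>{1..n}. (-1::complex)) * X" unfolding X_def by (rule prod.distrib)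
    also have "\<dots> = (-1) ^ n * X" by simp
    finally show ?thesis unfolding d using Xnz Qnz by simp
  qed
  have tk: "poly p (z k) / (\<Prod>j\<in>{0..n}-{k}. (z k - z j)) = - (alpha k m / Q ^ M)" if k: "k \<in> {1..n}" for k
  proof -
    have "{0..n}-{k} = insert 0 ({1..n}-{k})" using k by auto
    then have "(\<Prod>j\<in>{0..n}-{k}. (z k - z j)) = (Y m k - 0) * (\<Prod>j\<in>{1..n}-{k}. (Y m k - Y m j))"
      using k by (auto simp: z_def intro!: prod.cong)
    moreover have "poly p (z k) = (\<Prod>j\<in>{1..n}. Y m k - x j)"
      using k by (simp add: p_def z_def poly_prod)
    ultimately show ?thesis using Qnz unfolding alpha_def M_def by simp
  qed
  have "(\<Sum>k\<in>{0..n}. poly p (z k) / (\<Prod>j\<in>{0..n}-{k}. (z k - z j)))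
        = 1 / Q ^ M + (\<Sum>k\<in>{1..n}. - (alpha k m / Q ^ M))"
  proof -
    have "(\<Sum>k\<in>{0..n}. poly p (z k) / (\<Prod>j\<in>{0..n}-{k}. (z k - z j)))
       = poly p (z 0) / (\<Prod>j\<in>{0..n}-{0}. (z 0 - z j)) + (\<Sum>k\<in>{Suc 0..n}. poly p (z k) / (\<Prod>j\<in>{0..n}-{k}. (z k - z j)))"
      by (rule sum.atLeast_Suc_atMost) simp
    also have "(\<Sum>k\<in>{Suc 0..n}. poly p (z k) / (\<Prod>j\<in>{0..n}-{k}. (z k - z j))) = (\<Sum>k\<in>{1..n}. - (alpha k m / Q ^ M))"
      by (rule sum.cong) (auto simp: tk)
    finally show ?thesis unfolding t0 .
  qed
  with L have "- ((\<Sum>k\<in>{1..n}. alpha k m) / Q ^ M) = 1 - 1 / Q ^ M"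
    by (simp add: sum_divide_distrib sum_negf algebra_simps)
  then show ?thesis using Qnz unfolding M_def[symmetric] by (simp add: field_simps)
qed

lemma beta_sum: "(\<Sum>k\<in>{1..n}. beta k m) = 1"
proof -
  have "(\<Sum>k\<in>{1..n}. poly (monom 1 (n - 1)) (Y m k) / (\<Prod>j\<in>{1..n}-{k}. (Y m k - Y m j))) = coeff (monom 1 (n - 1)) (n - 1)"
    by (rule lagrange_coeff) (use n1 Y_inj in \<open>auto simp: degree_monom_eq\<close>)
  then show ?thesis by (simp add: beta_def poly_monom)
qed

lemma alpha_zero:
  assumes k: "k \<in> {1..n}" and mk: "m k = 0"
  shows "alpha k m = 0"
proof -
  have "(\<Prod>j\<in>{1..n}. Y m k - x j) = 0"
  proof (rule prod_zero)
    show "\<exists>j\<in>{1..n}. Y m k - x j = 0" using k mk by (intro bexI[of _ k]) (auto simp: Y_def)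
  qed simp
  then show ?thesis unfolding alpha_def by simp
qed

definition DD :: "nat \<Rightarrow> (nat \<Rightarrow> nat) set" where
  "DD N = {m \<in> {1..n} \<rightarrow>\<^sub>E (UNIV::nat set). (\<Sum>i\<in>{1..n}. m i) = N}"

lemma DD_finite: "finite (DD N)"
proof (rule finite_subset)
  show "DD N \<subseteq> {1..n} \<rightarrow>\<^sub>E {..N}"
  proof
    fix m assume m: "m \<in> DD N"
    have "m i \<le> N" if "i \<in> {1..n}" for i
      using m that member_le_sum[of i "{1..n}" m] by (auto simp: DD_def)
    then show "m \<in> {1..n} \<rightarrow>\<^sub>E {..N}" using m by (auto simp: DD_def PiE_def Pi_def)
  qed
  show "finite ({1..n} \<rightarrow>\<^sub>E {..N})" by (rule finite_PiE) auto
qed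

lemma DD_zero: "DD 0 = {(\<lambda>i\<in>{1..n}. 0)}"
proof
  show "DD 0 \<subseteq> {(\<lambda>i\<in>{1..n}. 0)}"
  proof
    fix m assume m: "m \<in> DD 0"
    then have "m i = 0" if "i \<in> {1..n}" for i using that by (auto simp: DD_def)
    moreover have "m i = undefined" if "i \<notin> {1..n}" for i using m that by (auto simp: DD_def PiE_def extensional_def)
    ultimately have "m = (\<lambda>i\<in>{1..n}. 0)" by (auto simp: fun_eq_iff)
    then show "m \<in> {(\<lambda>i\<in>{1..n}. 0)}" by simp
  qed
  show "{(\<lambda>i\<in>{1..n}. 0)} \<subseteq> DD 0" by (auto simp: DD_def)
qed

lemma Wc_zero: "Wc (\<lambda>i\<in>{1..n}. 0) = 1"
proof -
  let ?m = "(\<lambda>i\<in>{1..n}. 0) :: nat \<Rightarrow> nat"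
  have "WA Q n x ?m = 1" unfolding WA_def
  proof (intro prod.neutral ballI)
    fix i j assume i: "i \<in> {1..n}" and j: "j \<in> {i+1..n}"
    then have "x i \<noteq> x j" using x_neq[of i j] by auto
    then have "1 - x i / x j \<noteq> 0" using xnz[of j] j by (auto simp: divide_eq_1_iff)
    then show "(1 - x i / x j * Q powi (int (?m i) - int (?m j))) / (1 - x i / x j) = 1"
      using i j by simp
  qed
  moreover have "WB Q n x ?m = 1" unfolding WB_def by simp
  moreover have "WC n x ?m = 1" unfolding WC_def by simp
  moreover have "WD n ?m = 1" unfolding WD_def by simp
  moreover have "WEx n ?m = 0" unfolding WEx_def e2_def by simp
  ultimately show ?thesis unfolding Wc_def by simp
qed

lemma alpha_shift:
  assumes k: "k \<in> {1..n}"
  shows "(\<Sum>m\<in>DD (Suc N). alpha k m * Wc m) = (\<Sum>m\<in>DD N. beta k m * Wc m)"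
proof -
  have "(\<Sum>m\<in>DD (Suc N). alpha k m * Wc m) = (\<Sum>m\<in>{m\<in>DD (Suc N). m k \<noteq> 0}. alpha k m * Wc m)"
    by (rule sum.mono_neutral_right) (use DD_finite alpha_zero[OF k] in auto)
  also have "\<dots> = (\<Sum>m\<in>DD N. beta k m * Wc m)"
  proof (rule sum.reindex_bij_witness[symmetric, where j="\<lambda>m. m(k := Suc (m k))" and i="\<lambda>m. m(k := m k - 1)"])
    fix a assume a: "a \<in> DD N"
    show "(a(k := Suc (a k)))(k := (a(k := Suc (a k))) k - 1) = a" by simp
    show "a(k := Suc (a k)) \<in> {m \<in> DD (Suc N). m k \<noteq> 0}"
      using a k upd_sum[OF k, of a] by (auto simp: DD_def PiE_def extensional_def)
    show "alpha k (a(k := Suc (a k))) * Wc (a(k := Suc (a k))) = beta k a * Wc a"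
      by (rule W_step[OF k])
  next
    fix b assume b: "b \<in> {m \<in> DD (Suc N). m k \<noteq> 0}"
    then have bk: "b k \<noteq> 0" by simp
    show "(b(k := b k - 1))(k := Suc ((b(k := b k - 1)) k)) = b" using bk by auto
    have "Suc (\<Sum>i\<in>{1..n}. (b(k := b k - 1)) i) = (\<Sum>i\<in>{1..n}. ((b(k := b k - 1))(k := Suc ((b(k := b k - 1)) k))) i)"
      by (rule upd_sum[OF k, symmetric])
    also have "(b(k := b k - 1))(k := Suc ((b(k := b k - 1)) k)) = b" using bk by auto
    finally show "b(k := b k - 1) \<in> DD N"
      using b k by (auto simp: DD_def PiE_def extensional_def)
  qed
  finally show ?thesis .
qed

lemma S_rec:
  "(1 - Q ^ Suc N) * (\<Sum>m\<in>DD (Suc N). Wc m) = (\<Sum>m\<in>DD N. Wc m)"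
proof -
  have "(1 - Q ^ Suc N) * (\<Sum>m\<in>DD (Suc N). Wc m) = (\<Sum>m\<in>DD (Suc N). (\<Sum>k\<in>{1..n}. alpha k m) * Wc m)"
    unfolding sum_distrib_left
  proof (rule sum.cong[OF refl])
    fix m assume "m \<in> DD (Suc N)"
    then have "(\<Sum>i\<in>{1..n}. m i) = Suc N" by (simp add: DD_def)
    then have "(\<Sum>k\<in>{1..n}. alpha k m) = 1 - Q ^ Suc N" using alpha_sum[of m] by simp
    then show "(1 - Q ^ Suc N) * Wc m = (\<Sum>k\<in>{1..n}. alpha k m) * Wc m" by simp
  qed
  also have "\<dots> = (\<Sum>k\<in>{1..n}. \<Sum>m\<in>DD (Suc N). alpha k m * Wc m)"
    unfolding sum_distrib_right by (rule sum.swap)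
  also have "\<dots> = (\<Sum>k\<in>{1..n}. \<Sum>m\<in>DD N. beta k m * Wc m)"
    by (rule sum.cong) (auto simp: alpha_shift)
  also have "\<dots> = (\<Sum>m\<in>DD N. (\<Sum>k\<in>{1..n}. beta k m) * Wc m)"
    unfolding sum_distrib_right by (rule sum.swap)
  also have "\<dots> = (\<Sum>m\<in>DD N. Wc m)" by (simp only: beta_sum mult_1)
  finally show ?thesis .
qed

lemma S_value: "(\<Sum>m\<in>DD N. Wc m) = inverse (qpoch Q Q N)"
proof (induction N)
  case 0
  have "(\<Sum>m\<in>DD 0. Wc m) = Wc (\<lambda>i\<in>{1..n}. 0) + sum Wc {}"
    unfolding DD_zero by (rule sum.insert) auto
  also have "sum Wc {} = 0" by (rule sum.empty)
  finally show ?case unfolding Wc_zero by simp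
next
  case (Suc N)
  have nz: "1 - Q ^ Suc N \<noteq> 0" using Qn1[of N] by simp
  have e: "(1 - Q ^ Suc N) * (\<Sum>m\<in>DD (Suc N). Wc m) = inverse (qpoch Q Q N)"
    using S_rec[of N] Suc by simp
  have "(\<Sum>m\<in>DD (Suc N). Wc m) = inverse (qpoch Q Q N) / (1 - Q ^ Suc N)"
    using nz e by (simp add: eq_divide_eq mult.commute)
  also have "\<dots> = inverse (qpoch Q Q (Suc N))"
    by (simp add: qpoch_Suc divide_inverse inverse_mult_distrib)
  finally show ?case .
qed

end

lemma choose2_real: "2 * real (m choose 2) = real m * (real m - 1)"
proof (induction m)
  case 0 then show ?case by simp
next
  case (Suc m)
  have "Suc m choose 2 = (m choose 2) + m" by (simp add: numeral_2_eq_2)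
  then show ?case using Suc by (simp add: algebra_simps)
qed

lemma pair_sum_sym:
  fixes g :: "nat \<Rightarrow> real"
  shows "(\<Sum>i\<in>{1..n}. \<Sum>j\<in>{i+1..n}. g i + g j) = (real n - 1) * (\<Sum>i\<in>{1..n}. g i)"
proof (induction n)
  case 0 then show ?case by simp
next
  case (Suc n)
  have "(\<Sum>i\<in>{1..Suc n}. \<Sum>j\<in>{i+1..Suc n}. g i + g j)
      = (\<Sum>i\<in>{1..n}. \<Sum>j\<in>{i+1..Suc n}. g i + g j) + (\<Sum>j\<in>{Suc n+1..Suc n}. g (Suc n) + g j)"
    by (simp add: sum.cl_ivl_Suc)
  also have "(\<Sum>j\<in>{Suc n+1..Suc n}. g (Suc n) + g j) = 0" by simp
  also have "(\<Sum>i\<in>{1..n}. \<Sum>j\<in>{i+1..Suc n}. g i + g j) = (\<Sum>i\<in>{1..n}. (\<Sum>j\<in>{i+1..n}. g i + g j) + (g i + g (Suc n)))"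
    by (rule sum.cong) (auto simp: sum.cl_ivl_Suc)
  also have "\<dots> = (\<Sum>i\<in>{1..n}. \<Sum>j\<in>{i+1..n}. g i + g j) + (\<Sum>i\<in>{1..n}. g i + g (Suc n))"
    by (rule sum.distrib)
  also have "(\<Sum>i\<in>{1..n}. \<Sum>j\<in>{i+1..n}. g i + g j) = (real n - 1) * (\<Sum>i\<in>{1..n}. g i)"
    by (rule Suc.IH)
  also have "(\<Sum>i\<in>{1..n}. g i + g (Suc n)) = (\<Sum>i\<in>{1..n}. g i) + real n * g (Suc n)"
    by (simp add: sum.distrib)
  finally show ?case by (simp add: sum.cl_ivl_Suc algebra_simps)
qed

lemma WEx_real:
  "real_of_int (WEx n m) = (\<Sum>i\<in>{1..n}. real ((i - 1) * m i))
     + (\<Sum>i\<in>{1..n}. \<Sum>j\<in>{i+1..n}. (real (m i) - real (m j))^2 / 2)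
     - (real n - 1) / 2 * real (\<Sum>i\<in>{1..n}. m i)"
proof -
  have c: "real (\<Sum>i\<in>{1..n}. m i choose 2) = (\<Sum>i\<in>{1..n}. real (m i) ^ 2 / 2) - real (\<Sum>i\<in>{1..n}. m i) / 2"
  proof -
    have "real (\<Sum>i\<in>{1..n}. m i choose 2) = (\<Sum>i\<in>{1..n}. real (m i) ^ 2 / 2 - real (m i) / 2)"
      unfolding of_nat_sum
    proof (rule sum.cong[OF refl])
      fix i show "real (m i choose 2) = real (m i) ^ 2 / 2 - real (m i) / 2"
        using choose2_real[of "m i"] by (simp add: power2_eq_square algebra_simps)
    qed
    then show ?thesis by (simp add: sum_subtractf sum_divide_distrib)
  qed
  have p: "(\<Sum>i\<in>{1..n}. \<Sum>j\<in>{i+1..n}. (real (m i) - real (m j))^2 / 2)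
        = (\<Sum>i\<in>{1..n}. \<Sum>j\<in>{i+1..n}. real (m i) ^ 2 / 2 + real (m j) ^ 2 / 2) - real (e2 n m)"
  proof -
    have "(\<Sum>i\<in>{1..n}. \<Sum>j\<in>{i+1..n}. (real (m i) - real (m j))^2 / 2)
        = (\<Sum>i\<in>{1..n}. \<Sum>j\<in>{i+1..n}. (real (m i) ^ 2 / 2 + real (m j) ^ 2 / 2) - real (m i * m j))"
      by (intro sum.cong refl) (simp add: power2_eq_square field_simps)
    also have "\<dots> = (\<Sum>i\<in>{1..n}. (\<Sum>j\<in>{i+1..n}. real (m i) ^ 2 / 2 + real (m j) ^ 2 / 2) - (\<Sum>j\<in>{i+1..n}. real (m i * m j)))"
      by (intro sum.cong refl) (rule sum_subtractf)
    also have "\<dots> = (\<Sum>i\<in>{1..n}. \<Sum>j\<in>{i+1..n}. real (m i) ^ 2 / 2 + real (m j) ^ 2 / 2) - (\<Sum>i\<in>{1..n}. \<Sum>j\<in>{i+1..n}. real (m i * m j))"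
      by (rule sum_subtractf)
    also have "(\<Sum>i\<in>{1..n}. \<Sum>j\<in>{i+1..n}. real (m i * m j)) = real (e2 n m)"
      unfolding e2_def of_nat_sum ..
    finally show ?thesis .
  qed
  have p2: "(\<Sum>i\<in>{1..n}. \<Sum>j\<in>{i+1..n}. real (m i) ^ 2 / 2 + real (m j) ^ 2 / 2)
       = (real n - 1) * (\<Sum>i\<in>{1..n}. real (m i) ^ 2 / 2)"
    by (rule pair_sum_sym)
  define SA where "SA = (\<Sum>i\<in>{1..n}. real ((i - 1) * m i))"
  define SC where "SC = real (\<Sum>i\<in>{1..n}. m i choose 2)"
  define S2 where "S2 = (\<Sum>i\<in>{1..n}. real (m i) ^ 2 / 2)"
  define SM where "SM = real (\<Sum>i\<in>{1..n}. m i)"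
  define E where "E = real (e2 n m)"
  have c': "SC = S2 - SM / 2" unfolding SC_def S2_def SM_def by (rule c)
  have w: "real_of_int (WEx n m) = SA + real (n - 1) * SC - E"
    unfolding WEx_def SA_def SC_def E_def by (simp add: of_nat_sum)
  show ?thesis
  proof (cases "n = 0")
    case True then show ?thesis by (simp add: WEx_def e2_def)
  next
    case False
    then have nn: "real (n - 1) = real n - 1" by simp
    show ?thesis unfolding w p p2 SA_def[symmetric] S2_def[symmetric] SM_def[symmetric] E_def[symmetric] nn c'
      by (simp add: algebra_simps)
  qed
qed

lemma pair_bound:
  fixes q :: real and a :: complex and d :: int
  assumes q0: "0 < q" and q1: "q < 1" and a1: "a \<noteq> 1"
  shows "norm ((1 - a * complex_of_real q powi d) / (1 - a)) * q powr (real_of_int d ^ 2 / 2)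
           \<le> (1 + norm a) * q powr (-1/2) / norm (1 - a)"
proof -
  have na: "norm (1 - a) > 0" using a1 by simp
  have "norm (1 - a * complex_of_real q powi d) \<le> 1 + norm a * q powr real_of_int d"
  proof -
    have "norm (1 - a * complex_of_real q powi d) \<le> norm (1::complex) + norm (a * complex_of_real q powi d)"
      by (rule norm_triangle_ineq4)
    also have "norm (a * complex_of_real q powi d) = norm a * q powr real_of_int d"
      using q0 by (simp add: norm_mult norm_power_int powr_real_of_int')
    finally show ?thesis by simp
  qed
  then have "norm (1 - a * complex_of_real q powi d) * q powr (real_of_int d ^ 2 / 2)
        \<le> (1 + norm a * q powr real_of_int d) * q powr (real_of_int d ^ 2 / 2)"
    by (rule mult_right_mono) simp
  also have "\<dots> = q powr (real_of_int d ^ 2 / 2) + norm a * q powr (real_of_int d + real_of_int d ^ 2 / 2)"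
    by (simp add: powr_add algebra_simps)
  also have "\<dots> \<le> q powr (-1/2) + norm a * q powr (-1/2)"
  proof (rule add_mono)
    have "q powr (real_of_int d ^ 2 / 2) \<le> q powr 0"
      using q0 q1 by (intro powr_mono') auto
    also have "\<dots> \<le> q powr (-1/2)"
      using q0 q1 by (intro powr_mono') auto
    finally show "q powr (real_of_int d ^ 2 / 2) \<le> q powr (-1/2)" .
    have "-1/2 \<le> real_of_int d + real_of_int d ^ 2 / 2"
    proof -
      have "0 \<le> (real_of_int d + 1) ^ 2 / 2" by simp
      then show ?thesis by (simp add: power2_eq_square algebra_simps)
    qed
    then have "q powr (real_of_int d + real_of_int d ^ 2 / 2) \<le> q powr (-1/2)"
      using q0 q1 by (intro powr_mono') auto
    then show "norm a * q powr (real_of_int d + real_of_int d ^ 2 / 2) \<le> norm a * q powr (-1/2)"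
      by (rule mult_left_mono) simp
  qed
  also have "\<dots> = (1 + norm a) * q powr (-1/2)" by (simp add: algebra_simps)
  finally have "norm (1 - a * complex_of_real q powi d) * q powr (real_of_int d ^ 2 / 2) \<le> (1 + norm a) * q powr (-1/2)" .
  then show ?thesis using na
    by (simp add: norm_divide divide_simps)
qed

lemma norm_inv_prod:
  fixes f :: "nat \<Rightarrow> complex"
  shows "norm (inverse (\<Prod>i\<in>A. f i)) = (\<Prod>i\<in>A. norm (inverse (f i)))"
  by (simp add: prod_norm[symmetric] prod_inversef[symmetric] o_def)

locale Wbound = Wsetup +
  fixes q :: real
  assumes Qq: "Q = complex_of_real q" and q0: "0 < q" and q1: "q < 1"
begin

lemma normQ: "norm Q < 1" using Qq q0 q1 by simp

lemma WB_inv_bound: "\<exists>KB>0. \<forall>m. norm (inverse (WB Q n x m)) \<le> KB"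
proof -
  have ex: "\<exists>K>0. \<forall>N. norm (inverse (qpoch (Q * x i / x j) Q N)) \<le> K" if i: "i \<in> {1..n}" and j: "j \<in> {1..n}" for i j
  proof (rule qpoch_inv_bounded[OF normQ])
    fix l
    show "1 - Q * x i / x j * Q ^ l \<noteq> 0"
    proof
      assume h: "1 - Q * x i / x j * Q ^ l = 0"
      show False
      proof (cases "i = j")
        case True
        then have "Q ^ Suc l = 1" using h xnz[OF i] by (simp add: algebra_simps)
        then show False using Qn1 by blast
      next
        case False
        have "x j = x i * Q ^ Suc l" using h xnz[OF j] by (simp add: field_simps)
        then have "x i / x j = inverse (Q ^ Suc l)" using xnz[OF i] Qnz by (simp add: field_simps)
        also have "\<dots> = Q powi (- int (Suc l))" by (simp only: power_int_minus power_int_of_nat)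
        finally have "x i / x j = Q powi (- int (Suc l))" .
        then show False using xgen[OF i j False] by blast
      qed
    qed
  qed
  define Kf where "Kf i j = (SOME K. K > 0 \<and> (\<forall>N. norm (inverse (qpoch (Q * x i / x j) Q N)) \<le> K))" for i j
  have Kf: "Kf i j > 0 \<and> (\<forall>N. norm (inverse (qpoch (Q * x i / x j) Q N)) \<le> Kf i j)"
    if "i \<in> {1..n}" "j \<in> {1..n}" for i j
    unfolding Kf_def using someI_ex[OF ex[OF that]] .
  define KB where "KB = (\<Prod>i\<in>{1..n}. \<Prod>j\<in>{1..n}. Kf i j)"
  have "KB > 0" unfolding KB_def using Kf by (intro prod_pos) auto
  moreover have "norm (inverse (WB Q n x m)) \<le> KB" for m
  proof -
    have "norm (inverse (WB Q n x m)) = (\<Prod>i\<in>{1..n}. \<Prod>j\<in>{1..n}. norm (inverse (qpoch (Q * x i / x j) Q (m i))))"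
      unfolding WB_def norm_inv_prod ..
    also have "\<dots> \<le> KB" unfolding KB_def
      using Kf by (intro prod_mono conjI) (auto intro!: prod_nonneg)
    finally show ?thesis .
  qed
  ultimately show ?thesis by blast
qed

lemma WC_norm:
  "norm (WC n x m) = (\<Prod>i\<in>{1..n}. (norm (x i) ^ n / norm (\<Prod>j\<in>{1..n}. x j)) ^ m i)"
proof -
  define P where "P = norm (\<Prod>j\<in>{1..n}. x j)"
  define M where "M = (\<Sum>i\<in>{1..n}. m i)"
  have Pnz: "P \<noteq> 0" unfolding P_def using xnz by simp
  have "norm (WC n x m) = (\<Prod>i\<in>{1..n}. norm (x i) ^ (n * m i) / norm (x i) ^ M)"
    unfolding WC_def prod_norm[symmetric] M_def[symmetric]
  proof (rule prod.cong[OF refl])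
    fix i assume i: "i \<in> {1..n}"
    have e: "int n * int (m i) - int M = int (n * m i) - int M" by simp
    have "norm (x i powi (int n * int (m i) - int M)) = norm (x i) powi (int (n * m i) - int M)"
      unfolding e by (simp only: norm_power_int)
    also have "\<dots> = norm (x i) ^ (n * m i) / norm (x i) ^ M"
      using xnz[OF i] by (simp only: power_int_diff norm_eq_zero power_int_of_nat simp_thms)
    finally show "norm (x i powi (int n * int (m i) - int M)) = norm (x i) ^ (n * m i) / norm (x i) ^ M" .
  qed
  also have "\<dots> = (\<Prod>i\<in>{1..n}. norm (x i) ^ (n * m i)) / (\<Prod>i\<in>{1..n}. norm (x i) ^ M)"
    by (rule prod_dividef)
  also have "(\<Prod>i\<in>{1..n}. norm (x i) ^ M) = P ^ M"
    unfolding P_def prod_norm[symmetric] by (rule prod_power_distrib[symmetric])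
  also have "P ^ M = (\<Prod>i\<in>{1..n}. P ^ m i)" unfolding M_def by (rule power_sum)
  also have "(\<Prod>i\<in>{1..n}. norm (x i) ^ (n * m i)) / (\<Prod>i\<in>{1..n}. P ^ m i) = (\<Prod>i\<in>{1..n}. (norm (x i) ^ n / P) ^ m i)"
    by (simp add: prod_dividef power_mult power_divide)
  finally show ?thesis unfolding P_def .
qed

lemma WAE_bound: "\<exists>KA>0. \<forall>m. norm (WA Q n x m) * norm (Q powi WEx n m) \<le> KA * (q powr (- (real n - 1) / 2)) ^ (\<Sum>i\<in>{1..n}. m i)"
proof -
  define KA where "KA = (\<Prod>i\<in>{1..n}. \<Prod>j\<in>{i+1..n}. (1 + norm (x i / x j)) * q powr (-1/2) / norm (1 - x i / x j))"
  have a1: "x i / x j \<noteq> 1" if "i \<in> {1..n}" "j \<in> {i+1..n}" for i j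
  proof
    assume "x i / x j = 1"
    then have "x i = x j" using xnz[of j] that by (auto simp: divide_eq_1_iff)
    then show False using x_neq[of i j] that by auto
  qed
  have "KA > 0" unfolding KA_def using a1 q0 by (intro prod_pos) (auto intro!: divide_pos_pos mult_pos_pos add_pos_nonneg)
  moreover have "norm (WA Q n x m) * norm (Q powi WEx n m) \<le> KA * (q powr (- (real n - 1) / 2)) ^ (\<Sum>i\<in>{1..n}. m i)" for m
  proof -
    define SA where "SA = (\<Sum>i\<in>{1..n}. real ((i - 1) * m i))"
    define PP where "PP = (\<Sum>i\<in>{1..n}. \<Sum>j\<in>{i+1..n}. (real (m i) - real (m j))^2 / 2)"
    define M where "M = (\<Sum>i\<in>{1..n}. m i)"
    have nQ: "norm (Q powi WEx n m) = q powr SA * q powr PP * q powr (- (real n - 1) / 2 * real M)"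
    proof -
      have "norm (Q powi WEx n m) = q powi WEx n m" unfolding Qq using q0 by (simp add: norm_power_int)
      also have "\<dots> = q powr real_of_int (WEx n m)" using q0 by (simp add: powr_real_of_int')
      also have "real_of_int (WEx n m) = SA + PP + (- (real n - 1) / 2 * real M)"
        unfolding WEx_real SA_def PP_def M_def by (simp add: field_simps)
      finally show ?thesis by (simp only: powr_add)
    qed
    have SA1: "q powr SA \<le> 1" using q0 q1 unfolding SA_def by (intro powr_le1 sum_nonneg) auto
    have PP: "q powr PP = (\<Prod>i\<in>{1..n}. \<Prod>j\<in>{i+1..n}. q powr ((real (m i) - real (m j))^2 / 2))"
      unfolding PP_def using q0 by (simp add: powr_sum)
    have "norm (WA Q n x m) * q powr PP
        = (\<Prod>i\<in>{1..n}. \<Prod>j\<in>{i+1..n}. norm ((1 - x i / x j * Q powi (int (m i) - int (m j))) / (1 - x i / x j))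
              * q powr ((real (m i) - real (m j))^2 / 2))"
      unfolding WA_def PP prod_norm[symmetric] prod.distrib ..
    also have "\<dots> \<le> KA" unfolding KA_def
    proof (intro prod_mono conjI)
      fix i j assume i: "i \<in> {1..n}" and j: "j \<in> {i+1..n}"
      have "norm ((1 - x i / x j * complex_of_real q powi (int (m i) - int (m j))) / (1 - x i / x j))
             * q powr (real_of_int (int (m i) - int (m j)) ^ 2 / 2)
           \<le> (1 + norm (x i / x j)) * q powr (-1/2) / norm (1 - x i / x j)"
        by (rule pair_bound[OF q0 q1 a1[OF i j]])
      then show "norm ((1 - x i / x j * Q powi (int (m i) - int (m j))) / (1 - x i / x j))
              * q powr ((real (m i) - real (m j))^2 / 2) \<le> (1 + norm (x i / x j)) * q powr (-1/2) / norm (1 - x i / x j)"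
        unfolding Qq by simp
    qed (auto intro!: prod_nonneg)
    finally have W1: "norm (WA Q n x m) * q powr PP \<le> KA" .
    have "0 \<le> norm (WA Q n x m) * q powr PP" by simp
    with W1 have KA0: "0 \<le> KA" by linarith
    have "norm (WA Q n x m) * norm (Q powi WEx n m) = (norm (WA Q n x m) * q powr PP) * q powr SA * q powr (- (real n - 1) / 2 * real M)"
      unfolding nQ by (simp add: mult_ac)
    also have "\<dots> \<le> KA * 1 * q powr (- (real n - 1) / 2 * real M)"
      using W1 SA1 q0 KA0 by (intro mult_right_mono mult_mono) auto
    also have "q powr (- (real n - 1) / 2 * real M) = (q powr (- (real n - 1) / 2)) ^ M"
      using q0 by (simp add: powr_power mult.commute)
    finally show ?thesis unfolding M_def by simp
  qed
  ultimately show ?thesis by blast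
qed

definition cc :: "nat \<Rightarrow> real" where
  "cc i = norm (x i) ^ n / norm (\<Prod>j\<in>{1..n}. x j) * q powr (- (real n - 1) / 2)"

lemma cc_pos: "i \<in> {1..n} \<Longrightarrow> cc i > 0"
  unfolding cc_def using xnz q0 by (auto intro!: mult_pos_pos divide_pos_pos)

lemma Wc_bound: "\<exists>K>0. \<forall>m. norm (Wc m) \<le> K * (\<Prod>i\<in>{1..n}. cc i ^ m i)"
proof -
  obtain KB where KB: "KB > 0" "\<And>m. norm (inverse (WB Q n x m)) \<le> KB" using WB_inv_bound by blast
  obtain KA where KA: "KA > 0" "\<And>m. norm (WA Q n x m) * norm (Q powi WEx n m) \<le> KA * (q powr (- (real n - 1) / 2)) ^ (\<Sum>i\<in>{1..n}. m i)"
    using WAE_bound by blast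
  have "norm (Wc m) \<le> (KA * KB) * (\<Prod>i\<in>{1..n}. cc i ^ m i)" for m
  proof -
    define t where "t = q powr (- (real n - 1) / 2)"
    have "norm (Wc m) = (norm (WA Q n x m) * norm (Q powi WEx n m)) * norm (inverse (WB Q n x m)) * norm (WC n x m)"
      unfolding Wc_def WD_def by (simp add: norm_mult norm_power)
    also have "\<dots> \<le> (KA * t ^ (\<Sum>i\<in>{1..n}. m i)) * KB * norm (WC n x m)"
    proof -
      have A: "norm (WA Q n x m) * norm (Q powi WEx n m) \<le> KA * t ^ (\<Sum>i\<in>{1..n}. m i)"
        using KA(2)[of m] unfolding t_def .
      have "0 \<le> KA * t ^ (\<Sum>i\<in>{1..n}. m i)" using KA(1) q0 unfolding t_def by simp
      then show ?thesis
        by (intro mult_right_mono[OF mult_mono[OF A KB(2)]]) auto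
    qed
    also have "(KA * t ^ (\<Sum>i\<in>{1..n}. m i)) * KB * norm (WC n x m) = (KA * KB) * (t ^ (\<Sum>i\<in>{1..n}. m i) * norm (WC n x m))"
      by (simp add: mult_ac)
    also have "t ^ (\<Sum>i\<in>{1..n}. m i) * norm (WC n x m) = (\<Prod>i\<in>{1..n}. cc i ^ m i)"
      unfolding WC_norm power_sum cc_def t_def prod.distrib[symmetric]
      by (intro prod.cong refl) (simp add: power_mult_distrib[symmetric] mult_ac)
    finally show ?thesis .
  qed
  then show ?thesis using KA KB by (intro exI[of _ "KA * KB"]) auto
qed

end

lemma prod_PiE_summable:
  fixes \<theta> :: "nat \<Rightarrow> real"
  assumes "finite A" and "\<And>i. i \<in> A \<Longrightarrow> 0 \<le> \<theta> i \<and> \<theta> i < 1"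
  shows "(\<lambda>m. \<Prod>i\<in>A. \<theta> i ^ m i) summable_on (A \<rightarrow>\<^sub>E (UNIV::nat set))"
  using assms
proof (induction A rule: finite_induct)
  case empty
  then show ?case by simp
next
  case (insert a A)
  have IH: "(\<lambda>m. \<Prod>i\<in>A. \<theta> i ^ m i) summable_on (A \<rightarrow>\<^sub>E (UNIV::nat set))"
    using insert by auto
  have ta: "0 \<le> \<theta> a" "\<theta> a < 1" using insert by auto
  define SA where "SA = infsum (\<lambda>m. \<Prod>i\<in>A. \<theta> i ^ m i) (A \<rightarrow>\<^sub>E (UNIV::nat set))"
  have hA: "((\<lambda>m. \<Prod>i\<in>A. \<theta> i ^ m i) has_sum SA) (A \<rightarrow>\<^sub>E (UNIV::nat set))"
    unfolding SA_def using IH by (rule has_sum_infsum)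
  let ?h = "\<lambda>(y::nat, g::nat \<Rightarrow> nat). g(a := y)"
  have inj: "inj_on ?h (UNIV \<times> (A \<rightarrow>\<^sub>E UNIV))"
    using inj_combinator[of a A "\<lambda>_. UNIV :: nat set"] insert.hyps by simp
  have img: "insert a A \<rightarrow>\<^sub>E (UNIV::nat set) = ?h ` (UNIV \<times> (A \<rightarrow>\<^sub>E UNIV))"
    using PiE_insert_eq[of a A "\<lambda>_. UNIV :: nat set"] by simp
  have "((\<lambda>m. \<Prod>i\<in>insert a A. \<theta> i ^ m i) \<circ> ?h) summable_on (UNIV \<times> (A \<rightarrow>\<^sub>E UNIV))"
  proof (rule summable_on_SigmaI)
    fix y :: nat
    have "((\<lambda>g. \<theta> a ^ y * (\<Prod>i\<in>A. \<theta> i ^ g i)) has_sum (\<theta> a ^ y * SA)) (A \<rightarrow>\<^sub>E UNIV)"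
      by (rule has_sum_cmult_right[OF hA])
    moreover have "((\<lambda>m. \<Prod>i\<in>insert a A. \<theta> i ^ m i) \<circ> ?h) (y, g) = \<theta> a ^ y * (\<Prod>i\<in>A. \<theta> i ^ g i)" for g
    proof -
      have "(\<Prod>i\<in>A. \<theta> i ^ (g(a := y)) i) = (\<Prod>i\<in>A. \<theta> i ^ g i)"
        using insert.hyps by (intro prod.cong) auto
      then show ?thesis using insert.hyps by simp
    qed
    ultimately show "((\<lambda>g. (((\<lambda>m. \<Prod>i\<in>insert a A. \<theta> i ^ m i) \<circ> ?h) (y, g))) has_sum (\<theta> a ^ y * SA)) (A \<rightarrow>\<^sub>E UNIV)"
      by simp
  next
    have "((\<lambda>y. \<theta> a ^ y * SA) has_sum (1 / (1 - \<theta> a) * SA)) UNIV"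
      by (rule has_sum_cmult_left[OF geom_has_sum_real[OF ta]])
    then show "(\<lambda>y. \<theta> a ^ y * SA) summable_on UNIV" by (rule has_sum_imp_summable)
  next
    fix y g assume "(y :: nat) \<in> UNIV" "g \<in> A \<rightarrow>\<^sub>E (UNIV :: nat set)"
    show "0 \<le> ((\<lambda>m. \<Prod>i\<in>insert a A. \<theta> i ^ m i) \<circ> ?h) (y, g)"
      using insert.prems by (auto intro!: prod_nonneg)
  qed
  then show ?case unfolding img summable_on_reindex[OF inj] .
qed

lemma n_geom_bound:
  fixes \<mu> \<mu>' :: real
  assumes "0 \<le> \<mu>" "\<mu> < \<mu>'"
  shows "\<exists>C>0. \<forall>M. real (M + 1) * \<mu> ^ M \<le> C * \<mu>' ^ M"
proof -
  define t where "t = \<mu> / \<mu>'"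
  have t: "0 \<le> t" "t < 1" using assms by (auto simp: t_def divide_simps)
  have "(\<lambda>M. of_nat M * t ^ M) \<longlonglongrightarrow> (0::real)"
    by (rule powser_times_n_limit_0) (use t in simp)
  then have "(\<lambda>M. of_nat M * t ^ M + t ^ M) \<longlonglongrightarrow> (0::real)"
    using LIMSEQ_power_zero[of t] t by (intro tendsto_add_zero) auto
  then have "Bseq (\<lambda>M. of_nat M * t ^ M + t ^ M)"
    using convergent_imp_Bseq convergentI by blast
  then obtain C where C: "C > 0" "\<And>M. norm (of_nat M * t ^ M + t ^ M) \<le> C"
    by (auto simp: Bseq_def)
  have "real (M + 1) * \<mu> ^ M \<le> C * \<mu>' ^ M" for M
  proof -
    have "real (M + 1) * \<mu> ^ M = (of_nat M * t ^ M + t ^ M) * \<mu>' ^ M"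
      using assms by (simp add: t_def power_divide algebra_simps)
    also have "\<dots> \<le> C * \<mu>' ^ M"
      using C(2)[of M] t assms by (intro mult_right_mono) auto
    finally show ?thesis .
  qed
  then show ?thesis using C(1) by blast
qed

lemma qphi_bound:
  fixes Q z w r s t u v :: complex
  assumes Q: "norm Q < 1" and hu: "\<And>i. 1 - u * Q ^ i \<noteq> 0" and hv: "\<And>i. 1 - v * Q ^ i \<noteq> 0"
  shows "\<exists>K>0. \<forall>M. norm (qphi r s t u v M z w Q) \<le> K * (real (M + 1) * max (norm z) (norm w) ^ M)"
proof -
  define \<mu> where "\<mu> = max (norm z) (norm w)"
  obtain K1 where K1: "K1 > 0" "\<And>N. norm (qpoch Q Q N) \<le> K1" using qpoch_bounded[OF Q] by blast
  obtain Kq where Kq: "Kq > 0" "\<And>N. norm (inverse (qpoch Q Q N)) \<le> Kq" using qpoch_qq_inv_bounded[OF Q] by blast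
  obtain Kr where Kr: "Kr > 0" "\<And>N. norm (qpoch r Q N) \<le> Kr" using qpoch_bounded[OF Q] by blast
  obtain Ks where Ks: "Ks > 0" "\<And>N. norm (qpoch s Q N) \<le> Ks" using qpoch_bounded[OF Q] by blast
  obtain Kt where Kt: "Kt > 0" "\<And>N. norm (qpoch t Q N) \<le> Kt" using qpoch_bounded[OF Q] by blast
  obtain Ku where Ku: "Ku > 0" "\<And>N. norm (inverse (qpoch u Q N)) \<le> Ku" using qpoch_inv_bounded[OF Q hu] by blast
  obtain Kv where Kv: "Kv > 0" "\<And>N. norm (inverse (qpoch v Q N)) \<le> Kv" using qpoch_inv_bounded[OF Q hv] by blast
  define K where "K = K1 * Kq * Kq * Kr * Ks * Kt * Ku * Kv"
  have Kpos: "K > 0" unfolding K_def using K1 Kq Kr Ks Kt Ku Kv by simp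
  have termb: "norm (qbinom Q M k * (qpoch r Q k * qpoch s Q k * qpoch t Q k) / (qpoch u Q k * qpoch v Q k) * z ^ (M - k) * w ^ k)
              \<le> K * \<mu> ^ M" if k: "k \<le> M" for M k
  proof -
    have "norm (qbinom Q M k * (qpoch r Q k * qpoch s Q k * qpoch t Q k) / (qpoch u Q k * qpoch v Q k) * z ^ (M - k) * w ^ k)
        = (norm (qpoch Q Q M) * norm (inverse (qpoch Q Q k)) * norm (inverse (qpoch Q Q (M - k)))
          * norm (qpoch r Q k) * norm (qpoch s Q k) * norm (qpoch t Q k) * norm (inverse (qpoch u Q k)) * norm (inverse (qpoch v Q k)))
          * (norm z ^ (M - k) * norm w ^ k)"
      by (simp add: qbinom_def norm_mult norm_divide norm_power norm_inverse divide_inverse mult_ac)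
    also have "\<dots> \<le> K * (\<mu> ^ (M - k) * \<mu> ^ k)"
    proof (rule mult_mono)
      show "norm (qpoch Q Q M) * norm (inverse (qpoch Q Q k)) * norm (inverse (qpoch Q Q (M - k)))
          * norm (qpoch r Q k) * norm (qpoch s Q k) * norm (qpoch t Q k) * norm (inverse (qpoch u Q k)) * norm (inverse (qpoch v Q k)) \<le> K"
        unfolding K_def using K1 Kq Kr Ks Kt Ku Kv
        by (intro mult_mono) (auto intro: mult_nonneg_nonneg)
      show "norm z ^ (M - k) * norm w ^ k \<le> \<mu> ^ (M - k) * \<mu> ^ k"
      proof -
        have mu0: "0 \<le> \<mu>" unfolding \<mu>_def by (simp add: le_max_iff_disj)
        have "norm z \<le> \<mu>" "norm w \<le> \<mu>" unfolding \<mu>_def by auto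
        then show ?thesis using mu0 by (intro mult_mono power_mono) auto
      qed
    qed (use Kpos in auto)
    also have "\<mu> ^ (M - k) * \<mu> ^ k = \<mu> ^ M" using k by (simp add: power_add[symmetric])
    finally show ?thesis .
  qed
  have "norm (qphi r s t u v M z w Q) \<le> K * (real (M + 1) * \<mu> ^ M)" for M
  proof -
    have "norm (qphi r s t u v M z w Q) \<le> (\<Sum>k\<le>M. norm (qbinom Q M k * (qpoch r Q k * qpoch s Q k * qpoch t Q k) / (qpoch u Q k * qpoch v Q k) * z ^ (M - k) * w ^ k))"
      unfolding qphi_def by (rule norm_sum)
    also have "\<dots> \<le> (\<Sum>k\<le>M. K * \<mu> ^ M)" by (intro sum_mono termb) auto
    also have "\<dots> = K * (real (M + 1) * \<mu> ^ M)" by simp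
    finally show ?thesis .
  qed
  then show ?thesis using Kpos unfolding \<mu>_def by blast
qed

theorem theorem8:
  fixes q :: real and n :: nat and x :: "nat \<Rightarrow> complex"
    and b z w r s t u v :: complex
  assumes q: "0 < q" "q < 1"
    and n: "n \<ge> 1"
    and x_nz: "\<And>i. i \<in> {1..n} \<Longrightarrow> x i \<noteq> 0"
    and x_gen: "\<And>i j k. i \<in> {1..n} \<Longrightarrow> j \<in> {1..n} \<Longrightarrow> i \<noteq> j \<Longrightarrow>
                  x i / x j \<noteq> complex_of_real q powi k"
    and u: "\<And>m::nat. u \<noteq> inverse (complex_of_real q ^ m)"
    and v: "\<And>m::nat. v \<noteq> inverse (complex_of_real q ^ m)"
    and bz: "\<And>m::nat. b * z \<noteq> inverse (complex_of_real q ^ m)"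
    and zw: "max (cmod z) (cmod w) < 1"
    and zw2: "\<And>j. j \<in> {1..n} \<Longrightarrow>
       max (cmod z) (cmod w) < cmod (\<Prod>i\<in>{1..n}. x i) * cmod (x j) powi (- int n)
                                * q powr ((real n - 1) / 2)"
  shows "((\<lambda>m. Wt q n x m * qpoch b (complex_of_real q) (\<Sum>i\<in>{1..n}. m i)
                 * qphi r s t u v (\<Sum>i\<in>{1..n}. m i) z w (complex_of_real q))
           has_sum
           (qpoch_inf (b * z) (complex_of_real q) / qpoch_inf z (complex_of_real q)
             * (\<Sum>N. (qpoch r (complex_of_real q) N * qpoch s (complex_of_real q) N
                       * qpoch t (complex_of_real q) N * qpoch b (complex_of_real q) N)
                      / (qpoch (complex_of_real q) (complex_of_real q) N
                         * qpoch u (complex_of_real q) N * qpoch v (complex_of_real q) N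
                         * qpoch (b * z) (complex_of_real q) N) * w ^ N)))
         ({1..n} \<rightarrow>\<^sub>E (UNIV :: nat set))"
proof -
  define Q where "Q = complex_of_real q"
  have Qnorm: "norm Q < 1" using q by (simp add: Q_def)
  have Qnz: "Q \<noteq> 0" using q by (simp add: Q_def)
  have Qn1: "Q ^ Suc l \<noteq> 1" for l
  proof -
    have "norm (Q ^ Suc l) < 1"
      using norm_mult_lt1[OF norm_pow_le1[OF Qnorm, of l] Qnorm] by (simp add: mult.commute)
    then show ?thesis by auto
  qed
  interpret Wbound Q n x q
    by unfold_locales (use Qnz Qn1 n x_nz x_gen q in \<open>auto simp: Q_def\<close>)
  have Wt_Wc: "Wt q n x m = Wc m" for m
    unfolding Wc_def unfolding Wt_split Q_def ..
  have fac: "1 - a * Q ^ i \<noteq> 0" if "\<And>m::nat. a \<noteq> inverse (complex_of_real q ^ m)" for a i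
  proof
    assume "1 - a * Q ^ i = 0"
    then have "a = inverse (Q ^ i)" using Qnz by (simp add: field_simps)
    then show False using that[of i] by (simp add: Q_def)
  qed
  have hu: "\<And>i. 1 - u * Q ^ i \<noteq> 0" using fac u by blast
  have hv: "\<And>i. 1 - v * Q ^ i \<noteq> 0" using fac v by blast
  have hbz: "\<And>i. 1 - b * z * Q ^ i \<noteq> 0" using fac bz by blast
  define \<mu> where "\<mu> = max (cmod z) (cmod w)"
  have mu0: "0 \<le> \<mu>" unfolding \<mu>_def by (simp add: le_max_iff_disj)
  have mu1: "\<mu> < 1" using zw unfolding \<mu>_def .
  have z1: "norm z < 1" and w1: "norm w < 1" using zw by auto
  \<comment> \<open>choice of an intermediate radius\<close>
  have icc: "inverse (cc j) = cmod (\<Prod>i\<in>{1..n}. x i) * cmod (x j) powi (- int n) * q powr ((real n - 1) / 2)"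
    if j: "j \<in> {1..n}" for j
  proof -
    have e0: "- (real n - 1) / 2 = - ((real n - 1) / 2)" by (simp add: field_simps)
    have e: "q powr (- (real n - 1) / 2) = inverse (q powr ((real n - 1) / 2))"
      unfolding e0 by (rule powr_minus)
    have "cmod (\<Prod>i\<in>{1..n}. x i) \<noteq> 0" using x_nz by simp
    then show ?thesis unfolding cc_def e using x_nz[OF j]
      by (simp add: power_int_minus field_simps)
  qed
  define L where "L = Min (insert 1 ((\<lambda>j. inverse (cc j)) ` {1..n}))"
  have finL: "finite (insert 1 ((\<lambda>j. inverse (cc j)) ` {1..n}))" by simp
  have muL: "\<mu> < L" unfolding L_def
    using mu1 zw2 icc unfolding \<mu>_def[symmetric] by (subst Min_gr_iff[OF finL]) auto
  have L1: "L \<le> 1" unfolding L_def using finL by (intro Min_le) auto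
  have Lcc: "L \<le> inverse (cc j)" if "j \<in> {1..n}" for j unfolding L_def using finL that by (intro Min_le) auto
  define \<mu>' where "\<mu>' = (\<mu> + L) / 2"
  have mu': "\<mu> < \<mu>'" "\<mu>' < L" using muL unfolding \<mu>'_def by auto
  define \<theta> where "\<theta> i = \<mu>' * cc i" for i
  have theta: "0 \<le> \<theta> i \<and> \<theta> i < 1" if i: "i \<in> {1..n}" for i
  proof
    show "0 \<le> \<theta> i" unfolding \<theta>_def using mu0 mu' cc_pos[OF i] by simp
    have "\<theta> i < L * cc i" unfolding \<theta>_def using mu' cc_pos[OF i] by simp
    also have "\<dots> \<le> inverse (cc i) * cc i" using Lcc[OF i] cc_pos[OF i] by (intro mult_right_mono) auto
    also have "\<dots> = 1" using cc_pos[OF i] by simp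
    finally show "\<theta> i < 1" .
  qed
  obtain KW where KW: "KW > 0" "\<And>m. norm (Wc m) \<le> KW * (\<Prod>i\<in>{1..n}. cc i ^ m i)" using Wc_bound by blast
  obtain Kb where Kb: "Kb > 0" "\<And>N. norm (qpoch b Q N) \<le> Kb" using qpoch_bounded[OF Qnorm] by blast
  obtain Kp where Kp: "Kp > 0" "\<And>N. norm (qphi r s t u v N z w Q) \<le> Kp * (real (N + 1) * \<mu> ^ N)"
    using qphi_bound[OF Qnorm hu hv] unfolding \<mu>_def by blast
  obtain C where C: "C > 0" "\<And>N. real (N + 1) * \<mu> ^ N \<le> C * \<mu>' ^ N"
    using n_geom_bound[OF mu0 mu'(1)] by blast
  define F where "F m = Wt q n x m * qpoch b Q (\<Sum>i\<in>{1..n}. m i) * qphi r s t u v (\<Sum>i\<in>{1..n}. m i) z w Q" for m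
  define K where "K = KW * Kb * Kp * C"
  have Fb: "norm (F m) \<le> K * (\<Prod>i\<in>{1..n}. \<theta> i ^ m i)" for m
  proof -
    define N where "N = (\<Sum>i\<in>{1..n}. m i)"
    have "norm (F m) = norm (Wc m) * norm (qpoch b Q N) * norm (qphi r s t u v N z w Q)"
      unfolding F_def N_def Wt_Wc by (simp add: norm_mult)
    also have "\<dots> \<le> (KW * (\<Prod>i\<in>{1..n}. cc i ^ m i)) * Kb * (Kp * (C * \<mu>' ^ N))"
    proof (intro mult_mono)
      show "norm (qphi r s t u v N z w Q) \<le> Kp * (C * \<mu>' ^ N)"
        using Kp(2)[of N] C(2)[of N] Kp(1) by (meson mult_left_mono less_imp_le order_trans)
    qed (use KW Kb Kp C mu0 mu' in \<open>auto intro!: prod_nonneg mult_nonneg_nonneg zero_le_power less_imp_le[OF cc_pos]\<close>)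
    also have "\<mu>' ^ N = (\<Prod>i\<in>{1..n}. \<mu>' ^ m i)" unfolding N_def by (rule power_sum)
    also have "(KW * (\<Prod>i\<in>{1..n}. cc i ^ m i)) * Kb * (Kp * (C * (\<Prod>i\<in>{1..n}. \<mu>' ^ m i)))
             = K * ((\<Prod>i\<in>{1..n}. \<mu>' ^ m i) * (\<Prod>i\<in>{1..n}. cc i ^ m i))"
      unfolding K_def by (simp add: mult_ac)
    also have "(\<Prod>i\<in>{1..n}. \<mu>' ^ m i) * (\<Prod>i\<in>{1..n}. cc i ^ m i) = (\<Prod>i\<in>{1..n}. \<theta> i ^ m i)"
      unfolding \<theta>_def prod.distrib[symmetric] power_mult_distrib ..
    finally show ?thesis .
  qed
  have Fsum: "F summable_on ({1..n} \<rightarrow>\<^sub>E (UNIV :: nat set))"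
  proof -
    have g: "(\<lambda>m. K * (\<Prod>i\<in>{1..n}. \<theta> i ^ m i)) summable_on ({1..n} \<rightarrow>\<^sub>E (UNIV :: nat set))"
      by (intro summable_on_cmult_right prod_PiE_summable) (use theta in auto)
    have "(\<lambda>m. norm (F m)) summable_on ({1..n} \<rightarrow>\<^sub>E (UNIV :: nat set))"
      by (rule Infinite_Sum.abs_summable_on_comparison_test'[OF g Fb])
    then show ?thesis by (rule abs_summable_summable)
  qed
  define S where "S = infsum F ({1..n} \<rightarrow>\<^sub>E (UNIV :: nat set))"
  have FS: "(F has_sum S) ({1..n} \<rightarrow>\<^sub>E (UNIV :: nat set))"
    unfolding S_def using Fsum by (rule has_sum_infsum)
  have "((\<lambda>(N, m). F m) has_sum S) (SIGMA N:UNIV. DD N)"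
  proof (subst has_sum_reindex_bij_witness[where j=snd and i="\<lambda>m. (\<Sum>i\<in>{1..n}. m i, m)"
          and T="{1..n} \<rightarrow>\<^sub>E (UNIV :: nat set)" and h=F and s'=S])
    show "((F has_sum S) ({1..n} \<rightarrow>\<^sub>E UNIV))" by (rule FS)
  qed (auto simp: DD_def PiE_def extensional_def)
  then have "((\<lambda>N. \<Sum>m\<in>DD N. F m) has_sum S) UNIV"
    by (rule has_sum_SigmaD) (auto intro: has_sum_finite DD_finite)
  then have Ssums: "(\<lambda>N. \<Sum>m\<in>DD N. F m) sums S" by (rule has_sum_imp_sums)
  have fib: "(\<Sum>m\<in>DD N. F m) = inverse (qpoch Q Q N) * qpoch b Q N * qphi r s t u v N z w Q" for N
  proof -
    have "(\<Sum>m\<in>DD N. F m) = (\<Sum>m\<in>DD N. Wc m * qpoch b Q N * qphi r s t u v N z w Q)"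
      by (rule sum.cong) (auto simp: F_def DD_def Wt_Wc)
    also have "\<dots> = (\<Sum>m\<in>DD N. Wc m) * qpoch b Q N * qphi r s t u v N z w Q"
      by (simp add: sum_distrib_right)
    also have "\<dots> = inverse (qpoch Q Q N) * qpoch b Q N * qphi r s t u v N z w Q"
      by (simp add: S_value)
    finally show ?thesis .
  qed
  have "(\<lambda>N. inverse (qpoch Q Q N) * qpoch b Q N * qphi r s t u v N z w Q) sums
           (qpoch_inf (b * z) Q / qpoch_inf z Q
             * (\<Sum>N. (qpoch r Q N * qpoch s Q N * qpoch t Q N * qpoch b Q N)
                      / (qpoch Q Q N * qpoch u Q N * qpoch v Q N * qpoch (b * z) Q N) * w ^ N))"
    by (rule one_dim_identity[OF Qnorm z1 w1 hu hv hbz])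
  moreover have "(\<lambda>N. inverse (qpoch Q Q N) * qpoch b Q N * qphi r s t u v N z w Q) sums S"
    using Ssums unfolding fib .
  ultimately have "S = qpoch_inf (b * z) Q / qpoch_inf z Q
             * (\<Sum>N. (qpoch r Q N * qpoch s Q N * qpoch t Q N * qpoch b Q N)
                      / (qpoch Q Q N * qpoch u Q N * qpoch v Q N * qpoch (b * z) Q N) * w ^ N)"
    using sums_unique2 by blast
  with FS show ?thesis unfolding F_def Q_def by simp
qed

end
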